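(* In the setting described in the context, let $\operatorname{zer}(A+B)$ be a nonempty closed convex set, suppose Method 2 does not stop, and let $(x^k)_{k\in\mathbb N}$ be the generated sequence. Define $\bar x:=P_{\operatorname{zer}(A+B)}(x^0)$. Then $(x^k)_{k\in\mathbb N}$ converges strongly to $\bar x$.
   Context: Let $\mathcal H$ be a real Hilbert space with inner product $\langle\cdot,\cdot\rangle$ and norm $\|\cdot\|$. Let $A_1:\mathcal H\to\mathcal H$ be $\beta$-cocoercive for some $\beta>0$ (i.e. $\langle A_1x-A_1y,x-y\rangle\ge\beta\|A_1x-A_1y\|^2$ for all $x,y$), let $A_2:\mathcal H\to\mathcal H$ be maximally monotone and uniformly continuous, let $B:\mathcal H\rightrightarrows\mathcal H$ be maximally monotone, and set $A:=A_1+A_2$; $\operatorname{zer}(A+B):=\{x:0\in Ax+Bx\}$. $J_{\alpha B}:=(I+\alpha B)^{-1}$ for $\alpha>0$, and $P_C$ denotes the orthogonal projection onto a nonempty closed convex set $C$. Fix $\theta,\delta\in(0,1)$, $\bar\delta>0$ with $1-\delta-\bar\delta>0$, and $\alpha_{-1}>0$ with $\alpha_{-1}\le4\beta\bar\delta$. Conceptual Algorithm: pick $x^0\in\mathcal H$. Given $x^k$ and $\alpha_{k-1}$, for $j\in\mathbb N$ let $\bar x^k_j:=J_{\alpha_{k-1}\theta^jB}(x^k-\alpha_{k-1}\theta^jAx^k)$ and let $j(k)$ be the smallest $j\in\mathbb N$ with $\alpha_{k-1}\theta^j\langle A_2x^k-A_2\bar x^k_j,x^k-\bar x^k_j\rangle\le\delta\|x^k-\bar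 x^k_j\|^2$. Set $\alpha_k:=\alpha_{k-1}\theta^{j(k)}$, $\bar x^k:=J_{\alpha_kB}(x^k-\alpha_kAx^k)$, $r_k:=\frac{\bar\delta}{\alpha_k}\|x^k-\bar x^k\|^2$, $T_k:=\{x\in\mathcal H:\langle \frac{x^k-\bar x^k}{\alpha_k}-(A_2x^k-A_2\bar x^k),x-\bar x^k\rangle\le r_k\}$ and $\Gamma_k:=\{x\in\mathcal H:\langle x^0-x^k,x-x^k\rangle\le0\}$. Method 2 sets $x^{k+1}:=P_{T_k\cap\Gamma_k}(x^0)$ and stops if $x^{k+1}=x^k$. *)

theory Defs
  imports "HOL-Analysis.Analysis"
begin

text \<open>Real Hilbert space: a complete real inner product space,
  i.e. a type of class real_inner and complete_space (possibly infinite-dimensional).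
  Set-valued operators are functions 'a => 'a set.\<close>

definition cocoercive :: "real \<Rightarrow> ('a::real_inner \<Rightarrow> 'a) \<Rightarrow> bool" where
  "cocoercive \<beta> T \<longleftrightarrow>
     (\<forall>x y. inner (T x - T y) (x - y) \<ge> \<beta> * (norm (T x - T y))\<^sup>2)"

definition monotone_op :: "('a::real_inner \<Rightarrow> 'a set) \<Rightarrow> bool" where
  "monotone_op B \<longleftrightarrow>
     (\<forall>x y u v. u \<in> B x \<longrightarrow> v \<in> B y \<longrightarrow> inner (u - v) (x - y) \<ge> 0)"

definition maximally_monotone :: "('a::real_inner \<Rightarrow> 'a set) \<Rightarrow> bool" where
  "maximally_monotone B \<longleftrightarrow> monotone_op B \<and>
     (\<forall>B'. monotone_op B' \<and> (\<forall>x. B x \<subseteq> B' x) \<longrightarrow> B' = B)"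

definition zer_sum :: "('a::real_inner \<Rightarrow> 'a) \<Rightarrow> ('a \<Rightarrow> 'a set) \<Rightarrow> 'a set" where
  "zer_sum A B = {x. \<exists>b\<in>B x. A x + b = 0}"

text \<open>Resolvent J_{\<alpha>B} = (I + \<alpha> B)^{-1}: the (unique, for maximally monotone B and
  \<alpha> > 0) point y with x \<in> y + \<alpha> B y.\<close>
definition resolvent :: "real \<Rightarrow> ('a::real_inner \<Rightarrow> 'a set) \<Rightarrow> 'a \<Rightarrow> 'a" where
  "resolvent \<alpha> B x = (THE y. \<exists>b\<in>B y. x = y + \<alpha> *\<^sub>R b)"

definition proj :: "'a::real_inner set \<Rightarrow> 'a \<Rightarrow> 'a" where
  "proj C a = (THE p. p \<in> C \<and> (\<forall>y\<in>C. norm (a - p) \<le> norm (a - y)))"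

definition fb_point :: "('a::real_inner \<Rightarrow> 'a) \<Rightarrow> ('a \<Rightarrow> 'a set) \<Rightarrow> real \<Rightarrow> 'a \<Rightarrow> 'a" where
  "fb_point A B s x = resolvent s B (x - s *\<^sub>R A x)"

definition ls_index ::
  "('a::real_inner \<Rightarrow> 'a) \<Rightarrow> ('a \<Rightarrow> 'a) \<Rightarrow> ('a \<Rightarrow> 'a set) \<Rightarrow> real \<Rightarrow> real \<Rightarrow> real \<Rightarrow> 'a \<Rightarrow> nat" where
  "ls_index A1 A2 B \<theta> \<delta> \<alpha> x =
     (LEAST j. let s = \<alpha> * \<theta> ^ j; z = fb_point (\<lambda>u. A1 u + A2 u) B s x in
        s * inner (A2 x - A2 z) (x - z) \<le> \<delta> * (norm (x - z))\<^sup>2)"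

definition T_set :: "('a::real_inner \<Rightarrow> 'a) \<Rightarrow> real \<Rightarrow> real \<Rightarrow> 'a \<Rightarrow> 'a \<Rightarrow> 'a set" where
  "T_set A2 \<delta>b \<alpha> x xb =
     {z. inner ((1 / \<alpha>) *\<^sub>R (x - xb) - (A2 x - A2 xb)) (z - xb)
           \<le> (\<delta>b / \<alpha>) * (norm (x - xb))\<^sup>2}"

definition Gamma_set :: "'a::real_inner \<Rightarrow> 'a \<Rightarrow> 'a set" where
  "Gamma_set x0 x = {z. inner (x0 - x) (z - x) \<le> 0}"

text \<open>Method 2. The step-size sequence is indexed with a shift:
  alpha k = \<alpha>_{k-1}, so alpha 0 = \<alpha>_{-1} and alpha (Suc k) = \<alpha>_k.\<close>
definition method2_seq ::
  "('a::real_inner \<Rightarrow> 'a) \<Rightarrow> ('a \<Rightarrow> 'a) \<Rightarrow> ('a \<Rightarrow> 'a set) \<Rightarrow> real \<Rightarrow> real \<Rightarrow> real \<Rightarrow> real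
     \<Rightarrow> (nat \<Rightarrow> 'a) \<Rightarrow> (nat \<Rightarrow> real) \<Rightarrow> bool" where
  "method2_seq A1 A2 B \<theta> \<delta> \<delta>b \<alpha>0 x alpha \<longleftrightarrow>
     alpha 0 = \<alpha>0 \<and>
     (\<forall>k. alpha (Suc k) = alpha k * \<theta> ^ ls_index A1 A2 B \<theta> \<delta> (alpha k) (x k) \<and>
          (let xb = fb_point (\<lambda>u. A1 u + A2 u) B (alpha (Suc k)) (x k) in
           x (Suc k) = proj (T_set A2 \<delta>b (alpha (Suc k)) (x k) xb \<inter> Gamma_set (x 0) (x k)) (x 0)))"

end

theory Submission
  imports Defs
begin


definition mm_prop :: "('a::real_inner \<Rightarrow> 'a set) \<Rightarrow> bool" where
  "mm_prop M \<longleftrightarrow> monotone_op M \<and>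
     (\<forall>p q. (\<forall>y v. v \<in> M y \<longrightarrow> inner (v - q) (y - p) \<ge> 0) \<longrightarrow> q \<in> M p)"

lemma maxmono_mm_prop:
  assumes "maximally_monotone M"
  shows "mm_prop M"
proof -
  have mon: "monotone_op M" using assms unfolding maximally_monotone_def by auto
  have "q \<in> M p" if H: "\<forall>y v. v \<in> M y \<longrightarrow> inner (v - q) (y - p) \<ge> 0" for p q
  proof -
    define M' where "M' = (\<lambda>y. if y = p then insert q (M p) else M y)"
    have "monotone_op M'"
      unfolding monotone_op_def
    proof (intro allI impI)
      fix x y u v assume u: "u \<in> M' x" and v: "v \<in> M' y"
      show "inner (u - v) (x - y) \<ge> 0"
      proof (cases "x = p \<and> u = q")
        case True
        then show ?thesis
        proof (cases "y = p \<and> v = q")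
          case True2: True
          then show ?thesis using True by simp
        next
          case False
          then have "v \<in> M y" using v unfolding M'_def by (auto split: if_splits)
          then have "inner (v - q) (y - p) \<ge> 0" using H by auto
          moreover have "inner (u - v) (x - y) = inner (v - q) (y - p)"
            using True by (simp add: inner_diff_left inner_diff_right inner_commute)
          ultimately show ?thesis by simp
        qed
      next
        case False
        then have u': "u \<in> M x" using u unfolding M'_def by (auto split: if_splits)
        show ?thesis
        proof (cases "y = p \<and> v = q")
          case True
          then have "inner (u - q) (x - p) \<ge> 0" using H u' by auto
          then show ?thesis using True by simp
        next
          case False
          then have "v \<in> M y" using v unfolding M'_def by (auto split: if_splits)
          then show ?thesis using mon u' unfolding monotone_op_def by blast
        qed
      qed
    qed
    moreover have "\<forall>x. M x \<subseteq> M' x" unfolding M'_def by auto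
    ultimately have "M' = M" using assms unfolding maximally_monotone_def by blast
    then have "M' p = M p" by simp
    then show ?thesis unfolding M'_def by auto
  qed
  then show ?thesis using mon unfolding mm_prop_def by blast
qed

lemma small_t:
  fixes E D :: real
  assumes "\<And>t. 0 < t \<Longrightarrow> t \<le> 1 \<Longrightarrow> E + t * D \<ge> 0"
  shows "E \<ge> 0"
proof (rule ccontr)
  assume "\<not> E \<ge> 0"
  then have E: "E < 0" by simp
  define t where "t = min 1 ((- E) / (2 * \<bar>D\<bar> + 1))"
  have "(- E) / (2 * \<bar>D\<bar> + 1) > 0" using E by (intro divide_pos_pos) auto
  then have t0: "0 < t" "t \<le> 1" unfolding t_def by auto
  have tle: "t \<le> (- E) / (2 * \<bar>D\<bar> + 1)" unfolding t_def by auto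
  have "t * (2 * \<bar>D\<bar> + 1) \<le> - E"
  proof -
    have p: "2 * \<bar>D\<bar> + 1 > 0" by simp
    have "t * (2 * \<bar>D\<bar> + 1) \<le> ((- E) / (2 * \<bar>D\<bar> + 1)) * (2 * \<bar>D\<bar> + 1)"
      using tle p by (intro mult_right_mono) auto
    also have "\<dots> = - E" using p by simp
    finally show ?thesis .
  qed
  moreover have "t * \<bar>D\<bar> \<le> t * ((2 * \<bar>D\<bar> + 1) / 2)"
    using t0 by (intro mult_left_mono) auto
  ultimately have "t * \<bar>D\<bar> \<le> - E / 2" by simp

  moreover have "t * D \<le> t * \<bar>D\<bar>" using t0 by (intro mult_left_mono) auto
  ultimately have "E + t * D < 0" using E by linarith
  then show False using assms t0 by force
qed



lemma midnorm:
  fixes a b :: "'a::real_inner"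
  shows "(norm ((1/2) *\<^sub>R (a + b)))\<^sup>2 = ((norm a)\<^sup>2 + (norm b)\<^sup>2) / 2 - (norm (a - b))\<^sup>2 / 4"
  unfolding power2_norm_eq_inner
  by (simp add: inner_add_left inner_add_right inner_diff_left
      inner_diff_right inner_commute field_simps)

lemma segnorm:
  fixes x y :: "'a::real_inner"
  shows "(norm (x + t *\<^sub>R (y - x)))\<^sup>2 = (norm x)\<^sup>2 + 2 * t * inner x (y - x) + t\<^sup>2 * (norm (y - x))\<^sup>2"
  unfolding power2_norm_eq_inner
  by (simp add: inner_add_left inner_add_right inner_diff_left
      inner_diff_right inner_commute algebra_simps power2_eq_square)

lemma sumnorm:
  fixes x u :: "'a::real_inner"
  shows "(norm (x + u))\<^sup>2 = (norm x)\<^sup>2 + 2 * inner x u + (norm u)\<^sup>2"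
  unfolding power2_norm_eq_inner by (simp add: inner_add_left inner_add_right inner_commute)

lemma diffnorm:
  fixes x u :: "'a::real_inner"
  shows "(norm (x - u))\<^sup>2 = (norm x)\<^sup>2 - 2 * inner x u + (norm u)\<^sup>2"
  unfolding power2_norm_eq_inner by (simp add: inner_diff_left inner_diff_right inner_commute)

lemma cauchy_sq:
  fixes X :: "nat \<Rightarrow> 'a::real_normed_vector"
  assumes "\<And>n k. (norm (X n - X k))\<^sup>2 \<le> c * (1 / real (Suc n) + 1 / real (Suc k))"
  shows "Cauchy X"
proof (rule CauchyI)
  fix e :: real assume e: "0 < e"
  obtain N where N: "2 * \<bar>c\<bar> / e\<^sup>2 < real N" using reals_Archimedean2 by blast
  have "\<forall>m\<ge>N. \<forall>n\<ge>N. norm (X m - X n) < e"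
  proof (intro allI impI)
    fix m n assume mn: "N \<le> m" "N \<le> n"
    have "1 / real (Suc m) \<le> 1 / real (Suc N)" "1 / real (Suc n) \<le> 1 / real (Suc N)"
      using mn by (auto simp: frac_le)
    then have le2: "1 / real (Suc m) + 1 / real (Suc n) \<le> 2 / real (Suc N)" by simp
    have s0: "0 \<le> 1 / real (Suc m) + 1 / real (Suc n)" by simp
    have "c * (1 / real (Suc m) + 1 / real (Suc n)) \<le> \<bar>c\<bar> * (1 / real (Suc m) + 1 / real (Suc n))"
      using s0 by (intro mult_right_mono) auto
    also have "\<dots> \<le> \<bar>c\<bar> * (2 / real (Suc N))"
      using le2 by (intro mult_left_mono) auto
    finally have "c * (1 / real (Suc m) + 1 / real (Suc n)) \<le> \<bar>c\<bar> * (2 / real (Suc N))" .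
    also have "\<dots> < e\<^sup>2"
    proof -
      have "2 * \<bar>c\<bar> < e\<^sup>2 * real N" using N e by (simp add: pos_divide_less_eq mult.commute)
      also have "\<dots> \<le> e\<^sup>2 * real (Suc N)" using e by simp
      finally have "2 * \<bar>c\<bar> < e\<^sup>2 * real (Suc N)" .
      then show ?thesis by (simp add: divide_less_eq mult.commute)
    qed
    finally have "(norm (X m - X n))\<^sup>2 < e\<^sup>2" using assms[of m n] by linarith
    then show "norm (X m - X n) < e" using e by (meson abs_norm_cancel power2_less_imp_less less_le)
  qed
  then show "\<exists>M. \<forall>m\<ge>M. \<forall>n\<ge>M. norm (X m - X n) < e" by blast
qed

lemma cauchy_sq_lim:
  fixes X :: "nat \<Rightarrow> 'a::{real_normed_vector,complete_space}"
  assumes "\<And>n k. (norm (X n - X k))\<^sup>2 \<le> c * (1 / real (Suc n) + 1 / real (Suc k))"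
  shows "\<exists>l. X \<longlonglongrightarrow> l"
  using cauchy_sq[OF assms] Cauchy_convergent_iff convergent_def by blast

lemma lim_Suc_inv: "(\<lambda>n. 1 / real (Suc n)) \<longlonglongrightarrow> 0"
  using LIMSEQ_Suc[OF lim_1_over_n] by simp



lemma lin_helper1: "(m::real) \<le> ((m + a) + (m + b)) / 2 - S / 8 \<Longrightarrow> S \<le> 4 * (a + b)"
  by argo

lemma lin_helper2:
  fixes m t iv Qxu a b D :: real
  assumes "m \<le> (1 - t) * (m - Qxu) + t * iv + (Qxu + t * (a + b) + t\<^sup>2 * D)"
  shows "0 \<le> t * ((iv - (m - Qxu) + a + b) + t * D)"
proof -
  have "(1 - t) * (m - Qxu) + t * iv + (Qxu + t * (a + b) + t\<^sup>2 * D) - m = t * ((iv - (m - Qxu) + a + b) + t * D)"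
    by (simp add: algebra_simps power2_eq_square)
  then show ?thesis using assms(1) by linarith
qed

lemma quad_helper:
  fixes nx nu t a b p q :: real
  shows "(nx + 2 * t * a + t\<^sup>2 * p) / 2 + (nu + 2 * t * b + t\<^sup>2 * q) / 2 =
    (nx / 2 + nu / 2) + t * (a + b) + t\<^sup>2 * ((p + q) / 2)"
  by algebra

lemma minty0:
  fixes M :: "'a::{real_inner,complete_space} \<Rightarrow> 'a set"
  assumes mm: "mm_prop M"
  shows "\<exists>x. - x \<in> M x"
proof -
  have mon: "\<And>x y u v. u \<in> M x \<Longrightarrow> v \<in> M y \<Longrightarrow> inner (u - v) (x - y) \<ge> 0"
    using mm unfolding mm_prop_def monotone_op_def by blast
  have maxp: "\<And>p q. (\<And>y v. v \<in> M y \<Longrightarrow> inner (v - q) (y - p) \<ge> 0) \<Longrightarrow> q \<in> M p"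
    using mm unfolding mm_prop_def by blast
  define af where "af x u y v = inner x v + inner y u - inner y v" for x u y v :: 'a
  define Q where "Q x u = (norm x)\<^sup>2 / 2 + (norm u)\<^sup>2 / 2" for x u :: 'a
  define P where "P x u c \<longleftrightarrow> (\<forall>y v. v \<in> M y \<longrightarrow> af x u y v + Q x u \<le> c)" for x u c
  have afmon: "af y v y' v' \<le> inner y v" if "v' \<in> M y'" "v \<in> M y" for y v y' v'
  proof -
    have "inner (v - v') (y - y') \<ge> 0" using mon that by blast
    moreover have "inner (v - v') (y - y') = inner y v - af y v y' v'"
      unfolding af_def by (simp add: inner_diff_left inner_diff_right inner_commute)
    ultimately show ?thesis by simp
  qed
  have Qlow: "inner x u + Q x u \<ge> 0" for x u
  proof -
    have "inner x u + Q x u = (norm (x + u))\<^sup>2 / 2" unfolding Q_def sumnorm by simp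
    then show ?thesis using zero_le_power2[of "norm (x + u)"] by linarith
  qed
  have low: "inner x u + Q x u \<le> c" if "P x u c" for x u c
  proof (rule ccontr)
    assume "\<not> ?thesis"
    then have lt: "c - Q x u < inner x u" by simp
    have "u \<in> M x"
    proof (rule maxp)
      fix y v assume "v \<in> M y"
      then have "af x u y v + Q x u \<le> c" using that unfolding P_def by blast
      moreover have "inner (v - u) (y - x) = inner x u - af x u y v"
        unfolding af_def by (simp add: inner_diff_left inner_diff_right inner_commute)
      ultimately show "inner (v - u) (y - x) \<ge> 0" using lt by simp
    qed
    then have "af x u x u + Q x u \<le> c" using that unfolding P_def by blast
    moreover have "af x u x u = inner x u" unfolding af_def by (simp add: inner_commute)
    ultimately show False using lt by simp
  qed
  obtain y0 v0 where yv0: "v0 \<in> M y0"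
  proof -
    have "\<exists>y v. v \<in> M y"
    proof (rule ccontr)
      assume nex: "\<not> (\<exists>y v. v \<in> M y)"
      then have "0 \<in> M 0" by (intro maxp) auto
      then show False using nex by blast
    qed
    then show ?thesis using that by blast
  qed
  define S where "S = {c. \<exists>x u. P x u c}"
  have P0: "P y0 v0 (inner y0 v0 + Q y0 v0)"
    unfolding P_def using afmon[OF _ yv0] by auto
  then have Sne: "S \<noteq> {}" unfolding S_def by blast
  have Sbdd: "bdd_below S"
    unfolding S_def bdd_below_def using low Qlow by (smt (verit) mem_Collect_eq)
  define m where "m = Inf S"
  have mle: "m \<le> c" if "P x u c" for x u c
    unfolding m_def using that Sbdd by (intro cInf_lower) (auto simp: S_def)
  have Pmono: "P x u c'" if "P x u c" "c \<le> c'" for x u c c'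
    using that unfolding P_def by force
  have "\<exists>x u. P x u (m + 1 / real (Suc n))" for n
  proof -
    have "m < m + 1 / real (Suc n)" by simp
    then obtain c where "c \<in> S" "c < m + 1 / real (Suc n)"
      using cInf_lessD[OF Sne] unfolding m_def by blast
    then show ?thesis unfolding S_def using Pmono by (smt (verit) mem_Collect_eq)
  qed
  then obtain xs us where Pn: "\<And>n. P (xs n) (us n) (m + 1 / real (Suc n))" by metis
  have mid: "P ((1/2) *\<^sub>R (x1 + x2)) ((1/2) *\<^sub>R (u1 + u2))
      ((c1 + c2) / 2 - ((norm (x1 - x2))\<^sup>2 + (norm (u1 - u2))\<^sup>2) / 8)"
    if "P x1 u1 c1" "P x2 u2 c2" for x1 x2 u1 u2 c1 c2
    unfolding P_def
  proof (intro allI impI)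
    fix y v assume yv: "v \<in> M y"
    have h12: "af x1 u1 y v + Q x1 u1 \<le> c1" "af x2 u2 y v + Q x2 u2 \<le> c2"
      using that yv unfolding P_def by blast+
    moreover have e1: "af ((1/2) *\<^sub>R (x1 + x2)) ((1/2) *\<^sub>R (u1 + u2)) y v = (af x1 u1 y v + af x2 u2 y v) / 2"
      unfolding af_def by (simp add: inner_add_left inner_add_right field_simps)
    moreover have e2: "Q ((1/2) *\<^sub>R (x1 + x2)) ((1/2) *\<^sub>R (u1 + u2)) =
        (Q x1 u1 + Q x2 u2) / 2 - ((norm (x1 - x2))\<^sup>2 + (norm (u1 - u2))\<^sup>2) / 8"
      unfolding Q_def midnorm by (simp add: field_simps)
    from h12 show "af ((1/2) *\<^sub>R (x1 + x2)) ((1/2) *\<^sub>R (u1 + u2)) y v +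
        Q ((1/2) *\<^sub>R (x1 + x2)) ((1/2) *\<^sub>R (u1 + u2))
        \<le> (c1 + c2) / 2 - ((norm (x1 - x2))\<^sup>2 + (norm (u1 - u2))\<^sup>2) / 8"
      unfolding e1 e2 by (simp add: field_simps)
  qed
  have cb: "(norm (xs n - xs k))\<^sup>2 + (norm (us n - us k))\<^sup>2 \<le> 4 * (1 / real (Suc n) + 1 / real (Suc k))" for n k
  proof -
    have "m \<le> ((m + 1 / real (Suc n)) + (m + 1 / real (Suc k))) / 2 -
        ((norm (xs n - xs k))\<^sup>2 + (norm (us n - us k))\<^sup>2) / 8"
      by (rule mle[OF mid[OF Pn[of n] Pn[of k]]])
    then show ?thesis by (rule lin_helper1)
  qed
  have "\<exists>x. xs \<longlonglongrightarrow> x"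
    by (rule cauchy_sq_lim[of _ 4]) (use cb in \<open>smt (verit) zero_le_power2\<close>)
  then obtain x where xl: "xs \<longlonglongrightarrow> x" by blast
  have "\<exists>u. us \<longlonglongrightarrow> u"
    by (rule cauchy_sq_lim[of _ 4]) (use cb in \<open>smt (verit) zero_le_power2\<close>)
  then obtain u where ul: "us \<longlonglongrightarrow> u" by blast
  have Pxu: "P x u m"
    unfolding P_def
  proof (intro allI impI)
    fix y v assume yv: "v \<in> M y"
    have "(\<lambda>n. af (xs n) (us n) y v + Q (xs n) (us n)) \<longlonglongrightarrow> af x u y v + Q x u"
      unfolding af_def Q_def by (intro tendsto_intros xl ul) auto
    moreover have "(\<lambda>n. m + 1 / real (Suc n)) \<longlonglongrightarrow> m + 0"
      by (intro tendsto_intros lim_Suc_inv)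
    moreover have "\<forall>n. af (xs n) (us n) y v + Q (xs n) (us n) \<le> m + 1 / real (Suc n)"
      using Pn yv unfolding P_def by blast
    ultimately show "af x u y v + Q x u \<le> m"
      using LIMSEQ_le by fastforce
  qed
  have lowm: "inner x u \<le> m - Q x u" using low[OF Pxu] by simp
  have key: "inner (v - (- x)) (y - (- u)) \<ge> (norm (x + u))\<^sup>2" if yv: "v \<in> M y" for y v
  proof -
    define E where "E = inner y v - (m - Q x u) + inner x (y - x) + inner u (v - u)"
    define D where "D = ((norm (y - x))\<^sup>2 + (norm (v - u))\<^sup>2) / 2"
    have "E + t * D \<ge> 0" if t: "0 < t" "t \<le> 1" for t
    proof -
      define z where "z = x + t *\<^sub>R (y - x)"
      define w where "w = u + t *\<^sub>R (v - u)"
      define ct where "ct = (1 - t) * (m - Q x u) + t * inner y v + Q z w"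
      have "P z w ct"
        unfolding P_def
      proof (intro allI impI)
        fix y' v' assume y'v': "v' \<in> M y'"
        have a1: "af x u y' v' \<le> m - Q x u" using Pxu y'v' unfolding P_def by force
        have a2: "af y v y' v' \<le> inner y v" using afmon[OF y'v' yv] .
        have "af z w y' v' = (1 - t) * af x u y' v' + t * af y v y' v'"
          unfolding af_def z_def w_def
          by (simp add: inner_add_left inner_add_right inner_diff_left inner_diff_right algebra_simps)
        also have "\<dots> \<le> (1 - t) * (m - Q x u) + t * inner y v"
          using a1 a2 t by (intro add_mono mult_left_mono) auto
        finally show "af z w y' v' + Q z w \<le> ct" unfolding ct_def by simp
      qed
      then have "m \<le> ct" by (rule mle)
      moreover have "Q z w = Q x u + t * (inner x (y - x) + inner u (v - u)) + t\<^sup>2 * D"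
        unfolding Q_def z_def w_def D_def segnorm by (rule quad_helper)
      ultimately have "0 \<le> t * (E + t * D)"
        unfolding ct_def E_def by (intro lin_helper2) simp
      then show ?thesis using t by (simp add: zero_le_mult_iff)
    qed
    then have "E \<ge> 0" by (rule small_t)
    moreover have "inner (v - (- x)) (y - (- u)) - (norm (x + u))\<^sup>2 =
        inner y v - inner x u + inner x (y - x) + inner u (v - u)"
      unfolding sumnorm power2_norm_eq_inner
      by (simp add: inner_add_left inner_add_right inner_diff_left inner_diff_right inner_commute)
    ultimately show ?thesis using lowm unfolding E_def by simp
  qed
  have "- x \<in> M (- u)"
    by (rule maxp) (use key in \<open>smt (verit) zero_le_power2\<close>)
  from key[OF this] have "(norm (x + u))\<^sup>2 \<le> 0" by simp
  then have "norm (x + u) = 0" by simp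
  then have "x + u = 0" by simp
  then have "u = - x" using add_eq_0_iff by blast
  then show ?thesis using \<open>- x \<in> M (- u)\<close> by auto
qed



lemma minty:
  fixes B :: "'a::{real_inner,complete_space} \<Rightarrow> 'a set"
  assumes mm: "mm_prop B" and s: "s > 0"
  shows "\<exists>y. \<exists>b\<in>B y. w = y + s *\<^sub>R b"
proof -
  have mon: "\<And>x y u v. u \<in> B x \<Longrightarrow> v \<in> B y \<Longrightarrow> inner (u - v) (x - y) \<ge> 0"
    using mm unfolding mm_prop_def monotone_op_def by blast
  have maxp: "\<And>p q. (\<And>y v. v \<in> B y \<Longrightarrow> inner (v - q) (y - p) \<ge> 0) \<Longrightarrow> q \<in> B p"
    using mm unfolding mm_prop_def by blast
  define M where "M y = (\<lambda>b. s *\<^sub>R b) ` B (y + w)" for y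
  have "mm_prop M"
    unfolding mm_prop_def monotone_op_def
  proof (intro conjI allI impI)
    fix x y u v assume "u \<in> M x" "v \<in> M y"
    then obtain b1 b2 where b: "b1 \<in> B (x + w)" "b2 \<in> B (y + w)" "u = s *\<^sub>R b1" "v = s *\<^sub>R b2"
      unfolding M_def by auto
    have "inner (b1 - b2) ((x + w) - (y + w)) \<ge> 0" using mon b(1,2) by blast
    then have "s * inner (b1 - b2) (x - y) \<ge> 0" using s by simp
    moreover have "inner (u - v) (x - y) = s * inner (b1 - b2) (x - y)"
      using b(3,4) by (simp add: inner_diff_left right_diff_distrib)
    ultimately show "inner (u - v) (x - y) \<ge> 0" by simp
  next
    fix p q assume H: "\<forall>y v. v \<in> M y \<longrightarrow> 0 \<le> inner (v - q) (y - p)"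
    have "(1 / s) *\<^sub>R q \<in> B (p + w)"
    proof (rule maxp)
      fix y' b assume b: "b \<in> B y'"
      then have "s *\<^sub>R b \<in> M (y' - w)" unfolding M_def by auto
      then have "0 \<le> inner (s *\<^sub>R b - q) ((y' - w) - p)" using H by blast
      moreover have "inner (s *\<^sub>R b - q) ((y' - w) - p) = s * inner (b - (1 / s) *\<^sub>R q) (y' - (p + w))"
        using s by (simp add: inner_diff_left algebra_simps)
      ultimately show "inner (b - (1 / s) *\<^sub>R q) (y' - (p + w)) \<ge> 0"
        using s by (simp add: zero_le_mult_iff)
    qed
    then have "s *\<^sub>R ((1 / s) *\<^sub>R q) \<in> M p" unfolding M_def by (rule imageI)
    then show "q \<in> M p" using s by simp
  qed
  then obtain x where "- x \<in> M x" using minty0 by blast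
  then obtain b where b: "b \<in> B (x + w)" "- x = s *\<^sub>R b" unfolding M_def by auto
  then have "w = (x + w) + s *\<^sub>R b" by (metis add.commute add_minus_cancel)
  then show ?thesis using b(1) by blast
qed

lemma resolvent_prop:
  fixes B :: "'a::{real_inner,complete_space} \<Rightarrow> 'a set"
  assumes mm: "mm_prop B" and s: "s > 0"
  shows "\<exists>b\<in>B (resolvent s B w). w = resolvent s B w + s *\<^sub>R b"
proof -
  have mon: "\<And>x y u v. u \<in> B x \<Longrightarrow> v \<in> B y \<Longrightarrow> inner (u - v) (x - y) \<ge> 0"
    using mm unfolding mm_prop_def monotone_op_def by blast
  obtain y where y: "\<exists>b\<in>B y. w = y + s *\<^sub>R b" using minty[OF mm s] by blast
  have uniq: "y2 = y" if H2: "\<exists>b\<in>B y2. w = y2 + s *\<^sub>R b" for y2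
  proof -
    obtain b where b: "b \<in> B y" "w = y + s *\<^sub>R b" using y by blast
    obtain b2 where b2: "b2 \<in> B y2" "w = y2 + s *\<^sub>R b2" using H2 by blast
    have e: "y2 - y = s *\<^sub>R (b - b2)" using b b2 by (simp add: algebra_simps)
    have "inner (b2 - b) (y2 - y) \<ge> 0" using mon b2(1) b(1) by blast
    also have "inner (b2 - b) (y2 - y) = - s * (norm (b - b2))\<^sup>2"
      unfolding e power2_norm_eq_inner by (simp add: inner_diff_left inner_diff_right inner_commute algebra_simps)
    finally have "(norm (b - b2))\<^sup>2 \<le> 0" using s by (simp add: mult_le_0_iff)
    then have "b = b2" by simp
    then show ?thesis using e by simp
  qed
  have "resolvent s B w = y"
    unfolding resolvent_def using y uniq by (rule the_equality)
  then show ?thesis using y by simp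
qed



lemma real_aux_fb:
  fixes s t U V :: real
  assumes "0 < s" "s \<le> t" "0 \<le> U" "0 \<le> V" "t * U\<^sup>2 + s * V\<^sup>2 \<le> (s + t) * U * V"
  shows "U \<le> V \<and> V * s \<le> U * t"
proof -
  have prod: "(U - V) * (t * U - s * V) \<le> 0"
    using assms(5) by (simp add: algebra_simps power2_eq_square)
  have 1: "U \<le> V"
  proof (rule ccontr)
    assume "\<not> U \<le> V"
    then have "U - V > 0" by simp
    moreover have "t * U - s * V > 0"
    proof -
      have "s * V \<le> t * V" using assms by (intro mult_right_mono) auto
      moreover have "t * V < t * U" using assms \<open>\<not> U \<le> V\<close> by simp
      ultimately show ?thesis by simp
    qed
    ultimately have "(U - V) * (t * U - s * V) > 0" by simp
    then show False using prod by simp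
  qed
  have 2: "V * s \<le> U * t"
  proof (rule ccontr)
    assume a: "\<not> V * s \<le> U * t"
    have "U * s \<le> U * t" using assms by (intro mult_left_mono) auto
    then have "U * s < V * s" using a by simp
    then have "U < V" using assms by simp
    then have "U - V < 0" by simp
    moreover have "t * U - s * V < 0" using a by (simp add: mult.commute)
    ultimately have "(U - V) * (t * U - s * V) > 0" by (simp add: mult_neg_neg)
    then show False using prod by simp
  qed
  show ?thesis using 1 2 by simp
qed

lemma fb_mono:
  fixes B :: "'a::{real_inner,complete_space} \<Rightarrow> 'a set"
  assumes mm: "mm_prop B" and st: "0 < s" "s \<le> t"
  shows "norm (x - resolvent s B (x - s *\<^sub>R a)) \<le> norm (x - resolvent t B (x - t *\<^sub>R a)) \<and>
    norm (x - resolvent t B (x - t *\<^sub>R a)) * s \<le> norm (x - resolvent s B (x - s *\<^sub>R a)) * t"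
proof -
  have mon: "\<And>x y u v. u \<in> B x \<Longrightarrow> v \<in> B y \<Longrightarrow> inner (u - v) (x - y) \<ge> 0"
    using mm unfolding mm_prop_def monotone_op_def by blast
  define ps where "ps = resolvent s B (x - s *\<^sub>R a)"
  define pt where "pt = resolvent t B (x - t *\<^sub>R a)"
  have t0: "0 < t" using st by simp
  obtain bs where bs: "bs \<in> B ps" "x - s *\<^sub>R a = ps + s *\<^sub>R bs"
    using resolvent_prop[OF mm st(1)] unfolding ps_def by blast
  obtain bt where bt: "bt \<in> B pt" "x - t *\<^sub>R a = pt + t *\<^sub>R bt"
    using resolvent_prop[OF mm t0] unfolding pt_def by blast
  define u where "u = x - ps"
  define v where "v = x - pt"
  have sbs: "s *\<^sub>R bs = u - s *\<^sub>R a" using bs(2) unfolding u_def by (simp add: algebra_simps)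
  have tbt: "t *\<^sub>R bt = v - t *\<^sub>R a" using bt(2) unfolding v_def by (simp add: algebra_simps)
  have "inner (bs - bt) (ps - pt) \<ge> 0" using mon bs(1) bt(1) by blast
  then have "s * t * inner (bs - bt) (ps - pt) \<ge> 0" using st t0 by simp
  moreover have "s * t * inner (bs - bt) (ps - pt) = inner (t *\<^sub>R (s *\<^sub>R bs) - s *\<^sub>R (t *\<^sub>R bt)) (v - u)"
  proof -
    have vu: "v - u = ps - pt" unfolding u_def v_def by simp
    have "t *\<^sub>R (s *\<^sub>R bs) - s *\<^sub>R (t *\<^sub>R bt) = (s * t) *\<^sub>R (bs - bt)"
      by (simp add: scaleR_diff_right mult.commute)
    then show ?thesis unfolding vu by simp
  qed
  moreover have "inner (t *\<^sub>R (s *\<^sub>R bs) - s *\<^sub>R (t *\<^sub>R bt)) (v - u) =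
      (s + t) * inner u v - t * (norm u)\<^sup>2 - s * (norm v)\<^sup>2"
  proof -
    have "t *\<^sub>R (u - s *\<^sub>R a) - s *\<^sub>R (v - t *\<^sub>R a) = t *\<^sub>R u - s *\<^sub>R v"
      by (simp add: scaleR_diff_right mult.commute)
    then have "inner (t *\<^sub>R (s *\<^sub>R bs) - s *\<^sub>R (t *\<^sub>R bt)) (v - u) = inner (t *\<^sub>R u - s *\<^sub>R v) (v - u)"
      unfolding sbs tbt by simp
    also have "\<dots> = t * inner u v - t * inner u u - s * inner v v + s * inner v u"
      by (simp add: inner_diff_left inner_diff_right)
    also have "\<dots> = (s + t) * inner u v - t * (norm u)\<^sup>2 - s * (norm v)\<^sup>2"
      unfolding power2_norm_eq_inner by (simp add: inner_commute distrib_right)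
    finally show ?thesis .
  qed
  ultimately have "t * (norm u)\<^sup>2 + s * (norm v)\<^sup>2 \<le> (s + t) * inner u v" by simp
  also have "\<dots> \<le> (s + t) * (norm u * norm v)"
    using st t0 by (intro mult_left_mono) (auto simp: norm_cauchy_schwarz)
  finally have "norm u \<le> norm v \<and> norm v * s \<le> norm u * t"
    using real_aux_fb[OF st, of "norm u" "norm v"] by (simp add: mult.assoc)
  then show ?thesis unfolding u_def v_def ps_def pt_def .
qed

lemma growth:
  fixes f :: "'a::real_normed_vector \<Rightarrow> 'b::real_normed_vector"
  assumes "uniformly_continuous_on UNIV f"
  shows "\<exists>C>0. \<forall>x y. norm (f x - f y) \<le> C * (1 + norm (x - y))"
proof -
  obtain \<eta> where eta: "\<eta> > 0" "\<And>x x'. dist x' x < \<eta> \<Longrightarrow> dist (f x') (f x) < 1"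
    using assms unfolding uniformly_continuous_on_def by (metis UNIV_I zero_less_one)
  have ind: "\<forall>x y::'a. norm (x - y) \<le> real n * (\<eta> / 2) \<longrightarrow> norm (f x - f y) \<le> real n" for n
  proof (induction n)
    case 0
    then show ?case by simp
  next
    case (Suc n)
    show ?case
    proof (intro allI impI)
      fix x y :: 'a assume xy: "norm (x - y) \<le> real (Suc n) * (\<eta> / 2)"
      define w where "w = y + (real n / real (Suc n)) *\<^sub>R (x - y)"
      have "x - w = (x - y) - (real n / real (Suc n)) *\<^sub>R (x - y)" unfolding w_def by simp
      also have "\<dots> = (1 - real n / real (Suc n)) *\<^sub>R (x - y)" by (simp add: scaleR_diff_left)
      also have "1 - real n / real (Suc n) = 1 / real (Suc n)" by (simp add: field_simps)
      finally have xw: "x - w = (1 / real (Suc n)) *\<^sub>R (x - y)" .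
      have wy: "w - y = (real n / real (Suc n)) *\<^sub>R (x - y)" unfolding w_def by simp
      have "norm (x - w) = norm (x - y) / real (Suc n)" unfolding xw by simp
      also have "\<dots> \<le> \<eta> / 2" using xy by (simp add: divide_le_eq mult.commute)
      also have "\<dots> < \<eta>" using eta by simp
      finally have "dist x w < \<eta>" by (simp add: dist_norm)
      then have 1: "norm (f x - f w) < 1" using eta(2) by (simp add: dist_norm)
      have "norm (w - y) = real n / real (Suc n) * norm (x - y)" unfolding wy by simp
      also have "\<dots> \<le> real n / real (Suc n) * (real (Suc n) * (\<eta> / 2))"
        using xy by (intro mult_left_mono) auto
      also have "\<dots> = real n * (\<eta> / 2)" by simp
      finally have 2: "norm (f w - f y) \<le> real n" using Suc.IH by blast
      have "norm (f x - f y) \<le> norm (f x - f w) + norm (f w - f y)"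
        by (metis diff_add_cancel norm_triangle_ineq add_diff_eq)
      then show "norm (f x - f y) \<le> real (Suc n)" using 1 2 by simp
    qed
  qed
  define C where "C = max 1 (2 / \<eta>)"
  have "norm (f x - f y) \<le> C * (1 + norm (x - y))" for x y :: 'a
  proof -
    define n where "n = nat \<lceil>norm (x - y) / (\<eta> / 2)\<rceil>"
    have n1: "norm (x - y) / (\<eta> / 2) \<le> real n" unfolding n_def by linarith
    have r0: "0 \<le> norm (x - y) / (\<eta> / 2)" using eta by simp
    then have "real n = real_of_int \<lceil>norm (x - y) / (\<eta> / 2)\<rceil>" unfolding n_def by simp
    then have n2: "real n \<le> norm (x - y) / (\<eta> / 2) + 1"
      using ceiling_correct[of "norm (x - y) / (\<eta> / 2)"] by linarith
    have "norm (x - y) \<le> real n * (\<eta> / 2)" using n1 eta by (simp add: divide_le_eq)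
    then have "norm (f x - f y) \<le> real n" using ind by blast
    also have "\<dots> \<le> 2 / \<eta> * norm (x - y) + 1" using n2 by (simp add: mult.commute)
    also have "\<dots> \<le> C * norm (x - y) + C * 1"
      unfolding C_def by (intro add_mono mult_right_mono) auto
    finally show ?thesis by (simp add: algebra_simps)
  qed
  moreover have "C > 0" unfolding C_def by simp
  ultimately show ?thesis by blast
qed

lemma coco_lip:
  fixes A1 :: "'a::real_inner \<Rightarrow> 'a"
  assumes "\<beta> > 0" "cocoercive \<beta> A1"
  shows "\<beta> * norm (A1 x - A1 y) \<le> norm (x - y)"
proof -
  have "\<beta> * (norm (A1 x - A1 y))\<^sup>2 \<le> inner (A1 x - A1 y) (x - y)"
    using assms unfolding cocoercive_def by blast
  also have "\<dots> \<le> norm (A1 x - A1 y) * norm (x - y)" by (rule norm_cauchy_schwarz)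
  finally have h: "\<beta> * (norm (A1 x - A1 y))\<^sup>2 \<le> norm (A1 x - A1 y) * norm (x - y)" .
  show ?thesis
  proof (cases "A1 x = A1 y")
    case True then show ?thesis by simp
  next
    case False
    then have "norm (A1 x - A1 y) > 0" by simp
    have "norm (A1 x - A1 y) * (\<beta> * norm (A1 x - A1 y)) \<le> norm (A1 x - A1 y) * norm (x - y)"
      using h by (simp add: power2_eq_square mult.left_commute)
    then show ?thesis using \<open>norm (A1 x - A1 y) > 0\<close> by (simp add: mult_le_cancel_left_pos)
  qed
qed

lemma coco_mono:
  fixes A1 :: "'a::real_inner \<Rightarrow> 'a"
  assumes "\<beta> > 0" "cocoercive \<beta> A1"
  shows "inner (A1 x - A1 y) (x - y) \<ge> 0"
proof -
  have "\<beta> * (norm (A1 x - A1 y))\<^sup>2 \<le> inner (A1 x - A1 y) (x - y)"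
    using assms unfolding cocoercive_def by blast
  moreover have "\<beta> * (norm (A1 x - A1 y))\<^sup>2 \<ge> 0" using assms by simp
  ultimately show ?thesis by linarith
qed



lemma par_mid:
  fixes a y1 y2 :: "'a::real_inner"
  shows "(norm (y1 - y2))\<^sup>2 = 2 * (norm (a - y1))\<^sup>2 + 2 * (norm (a - y2))\<^sup>2 - 4 * (norm (a - (1/2) *\<^sub>R (y1 + y2)))\<^sup>2"
proof -
  have s1: "(a - y1) + (a - y2) = (a + a) - (y1 + y2)" by (simp add: algebra_simps)
  have s2: "a + a = 2 *\<^sub>R a" by (simp add: scaleR_2)
  have s3: "(1/2) *\<^sub>R ((a + a) - (y1 + y2)) = (1/2) *\<^sub>R (a + a) - (1/2) *\<^sub>R (y1 + y2)"
    by (rule scaleR_right_diff_distrib)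
  have s4: "(1/2) *\<^sub>R (a + a) = a" unfolding s2 by simp
  have e1: "a - (1/2) *\<^sub>R (y1 + y2) = (1/2) *\<^sub>R ((a - y1) + (a - y2))"
    unfolding s1 s3 s4 ..
  have e2: "(a - y1) - (a - y2) = - (y1 - y2)" by simp
  show ?thesis unfolding e1 midnorm e2 norm_minus_cancel by (simp add: field_simps)
qed

lemma mid_in:
  assumes "convex C" "y1 \<in> C" "y2 \<in> C"
  shows "(1/2) *\<^sub>R (y1 + y2) \<in> C"
proof -
  have "(1/2) *\<^sub>R y1 + (1/2) *\<^sub>R y2 \<in> C" by (rule convexD[OF assms]) auto
  then show ?thesis by (simp add: scaleR_right_distrib)
qed

lemma segnorm2:
  fixes x w :: "'a::real_inner"
  shows "(norm (x - t *\<^sub>R w))\<^sup>2 = (norm x)\<^sup>2 - 2 * t * inner x w + t\<^sup>2 * (norm w)\<^sup>2"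
  unfolding power2_norm_eq_inner
  by (simp add: inner_diff_left inner_diff_right inner_commute power2_eq_square algebra_simps)

lemma lin_helper3: "(n::real) \<le> n - 2 * t * i + t\<^sup>2 * d \<Longrightarrow> 0 \<le> t * (- 2 * i + t * d)"
  by (simp add: algebra_simps power2_eq_square)

lemma proj_props:
  fixes C :: "'a::{real_inner,complete_space} set"
  assumes cl: "closed C" and cv: "convex C" and ne: "C \<noteq> {}"
  shows "proj C a \<in> C" "\<forall>y\<in>C. norm (a - proj C a) \<le> norm (a - y)"
    "\<forall>y\<in>C. inner (a - proj C a) (y - proj C a) \<le> 0"
proof -
  define S where "S = (\<lambda>y. (norm (a - y))\<^sup>2) ` C"
  define m where "m = Inf S"
  have Sne: "S \<noteq> {}" using ne unfolding S_def by simp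
  have Sbdd: "bdd_below S"
  proof (rule bdd_belowI)
    fix c assume "c \<in> S"
    then show "0 \<le> c" unfolding S_def by auto
  qed
  have mle: "m \<le> (norm (a - y))\<^sup>2" if "y \<in> C" for y
  proof -
    have "(norm (a - y))\<^sup>2 \<in> S" unfolding S_def using that by (rule imageI)
    then show ?thesis unfolding m_def using Sbdd by (rule cInf_lower)
  qed
  have "\<forall>n. \<exists>y. y \<in> C \<and> (norm (a - y))\<^sup>2 < m + 1 / real (Suc n)"
  proof
    fix n
    have "m < m + 1 / real (Suc n)" by simp
    then obtain c where "c \<in> S" "c < m + 1 / real (Suc n)"
      using cInf_lessD[OF Sne] unfolding m_def by blast
    then show "\<exists>y. y \<in> C \<and> (norm (a - y))\<^sup>2 < m + 1 / real (Suc n)" unfolding S_def by blast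
  qed
  from choice[OF this] obtain ys where ys0: "\<forall>n. ys n \<in> C \<and> (norm (a - ys n))\<^sup>2 < m + 1 / real (Suc n)"
    by blast
  then have ys: "\<And>n. ys n \<in> C" "\<And>n. (norm (a - ys n))\<^sup>2 < m + 1 / real (Suc n)" by auto
  have cb: "(norm (ys n - ys k))\<^sup>2 \<le> 2 * (1 / real (Suc n) + 1 / real (Suc k))" for n k
  proof -
    have "m \<le> (norm (a - (1/2) *\<^sub>R (ys n + ys k)))\<^sup>2" using mle mid_in[OF cv ys(1) ys(1)] by blast
    then show ?thesis using par_mid[of "ys n" "ys k" a] ys(2)[of n] ys(2)[of k] by argo
  qed
  obtain p where pl: "ys \<longlonglongrightarrow> p" using cauchy_sq_lim[of ys 2] cb by blast
  have pC: "p \<in> C" using closed_sequentially[OF cl ys(1) pl] .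
  have "(norm (a - p))\<^sup>2 \<le> m"
  proof -
    have "(\<lambda>n. (norm (a - ys n))\<^sup>2) \<longlonglongrightarrow> (norm (a - p))\<^sup>2" by (intro tendsto_intros pl)
    moreover have "(\<lambda>n. m + 1 / real (Suc n)) \<longlonglongrightarrow> m + 0" by (intro tendsto_intros lim_Suc_inv)
    ultimately show ?thesis using ys(2) LIMSEQ_le[of "\<lambda>n. (norm (a - ys n))\<^sup>2" _ "\<lambda>n. m + 1 / real (Suc n)" "m + 0"]
      by (simp add: less_imp_le)
  qed
  then have pmin: "norm (a - p) \<le> norm (a - y)" if "y \<in> C" for y
    using mle[OF that] by (smt (verit) norm_ge_zero power2_le_imp_le)
  have uniq: "q = p" if "q \<in> C \<and> (\<forall>y\<in>C. norm (a - q) \<le> norm (a - y))" for q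
  proof -
    have qC: "q \<in> C" and qmin: "\<forall>y\<in>C. norm (a - q) \<le> norm (a - y)" using that by auto
    have eq: "norm (a - q) = norm (a - p)" using qmin pC pmin qC by (simp add: order_antisym)
    have "norm (a - p) \<le> norm (a - (1/2) *\<^sub>R (p + q))" using pmin mid_in[OF cv pC qC] by blast
    then have "(norm (a - p))\<^sup>2 \<le> (norm (a - (1/2) *\<^sub>R (p + q)))\<^sup>2"
      by (simp add: power_mono)
    moreover have "(norm (a - q))\<^sup>2 = (norm (a - p))\<^sup>2" using eq by simp
    ultimately have "(norm (p - q))\<^sup>2 \<le> 0" using par_mid[of p q a] by argo
    then show ?thesis by simp
  qed
  have pe: "proj C a = p" unfolding proj_def
    by (rule the_equality) (use pC pmin uniq in auto)
  show "proj C a \<in> C" "\<forall>y\<in>C. norm (a - proj C a) \<le> norm (a - y)" using pC pmin pe by auto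
  show "\<forall>y\<in>C. inner (a - proj C a) (y - proj C a) \<le> 0"
  proof
    fix y assume yC: "y \<in> C"
    define E where "E = - 2 * inner (a - p) (y - p)"
    define D where "D = (norm (y - p))\<^sup>2"
    have "E + t * D \<ge> 0" if t: "0 < t" "t \<le> 1" for t
    proof -
      have "(1 - t) *\<^sub>R p + t *\<^sub>R y \<in> C" using t by (intro convexD[OF cv pC yC]) auto
      moreover have "(1 - t) *\<^sub>R p + t *\<^sub>R y = p + t *\<^sub>R (y - p)"
        by (simp add: scaleR_diff_left scaleR_diff_right algebra_simps)
      ultimately have "norm (a - p) \<le> norm (a - (p + t *\<^sub>R (y - p)))" using pmin by auto
      moreover have "a - (p + t *\<^sub>R (y - p)) = (a - p) - t *\<^sub>R (y - p)" by simp
      ultimately have "(norm (a - p))\<^sup>2 \<le> (norm ((a - p) - t *\<^sub>R (y - p)))\<^sup>2"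
        by (simp add: power_mono)
      then have "0 \<le> t * (E + t * D)"
        unfolding segnorm2 E_def D_def by (rule lin_helper3)
      then show ?thesis using t by (simp add: zero_le_mult_iff)
    qed
    then have "E \<ge> 0" by (rule small_t)
    then show "inner (a - proj C a) (y - proj C a) \<le> 0" unfolding pe E_def by simp
  qed
qed



lemma directed_inter:
  fixes D :: "'i \<Rightarrow> 'a::{real_inner,complete_space} set" and jn :: "'i \<Rightarrow> 'i \<Rightarrow> 'i"
  assumes cl: "\<And>i. closed (D i)" and cv: "\<And>i. convex (D i)" and ne: "\<And>i. D i \<noteq> {}"
    and jn: "\<And>i i'. D (jn i i') \<subseteq> D i \<inter> D i'" and bd: "\<And>i. D i \<subseteq> cball c R"
  shows "\<exists>p. \<forall>i. p \<in> D i"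
proof -
  define P where "P i = proj (D i) c" for i
  define N where "N i = (norm (c - P i))\<^sup>2" for i
  have PD: "P i \<in> D i" for i unfolding P_def using proj_props(1)[OF cl cv ne] .
  have Pvar: "\<forall>y\<in>D i. inner (c - P i) (y - P i) \<le> 0" for i
    unfolding P_def using proj_props(3)[OF cl cv ne] .
  have NR: "N i \<le> R\<^sup>2" for i
  proof -
    have "P i \<in> cball c R" using PD bd by blast
    then have "norm (c - P i) \<le> R" by (simp add: dist_norm)
    then show ?thesis unfolding N_def by (intro power_mono) auto
  qed
  have sub: "N i + (norm (P i' - P i))\<^sup>2 \<le> N i'" if "D i' \<subseteq> D i" for i i'
  proof -
    have "P i' \<in> D i" using PD that by blast
    then have "inner (c - P i) (P i' - P i) \<le> 0" using Pvar by blast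
    moreover have "c - P i' = (c - P i) - (P i' - P i)" by simp
    then have "N i' = N i - 2 * inner (c - P i) (P i' - P i) + (norm (P i' - P i))\<^sup>2"
      unfolding N_def by (simp only: diffnorm)
    ultimately show ?thesis by linarith
  qed
  define Ms where "Ms = Sup (range N)"
  have bdd: "bdd_above (range N)" using NR by (intro bdd_aboveI2) auto
  have NMs: "N i \<le> Ms" for i unfolding Ms_def using bdd by (intro cSup_upper) auto
  have "\<forall>n. \<exists>i. Ms - 1 / real (Suc n) < N i"
  proof
    fix n
    have "Ms - 1 / real (Suc n) < Ms" by simp
    then show "\<exists>i. Ms - 1 / real (Suc n) < N i"
      unfolding Ms_def using less_cSup_iff[of "range N", OF _ bdd] by auto
  qed
  from choice[OF this] obtain iz where iz: "\<And>n. Ms - 1 / real (Suc n) < N (iz n)" by blast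
  define g where "g = rec_nat (iz 0) (\<lambda>n gn. jn gn (iz (Suc n)))"
  have g0: "g 0 = iz 0" and gS: "g (Suc n) = jn (g n) (iz (Suc n))" for n
    unfolding g_def by simp_all
  have gdec: "D (g (Suc n)) \<subseteq> D (g n)" for n using jn[of "g n" "iz (Suc n)"] gS[of n] by auto
  have gmono: "D (g m) \<subseteq> D (g n)" if "n \<le> m" for n m
    using lift_Suc_antimono_le[of "\<lambda>n. D (g n)", OF gdec that] .
  have gis: "D (g n) \<subseteq> D (iz n)" for n
  proof (cases n)
    case 0 then show ?thesis using g0 by simp
  next
    case (Suc k) then show ?thesis using gS[of k] jn[of "g k" "iz (Suc k)"] by auto
  qed
  have Ng: "Ms - 1 / real (Suc n) < N (g n)" for n
    using iz[of n] sub[OF gis[of n]] zero_le_power2[of "norm (P (g n) - P (iz n))"] by linarith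
  have close: "(norm (P i' - P (g n)))\<^sup>2 \<le> 1 / real (Suc n)" if "D i' \<subseteq> D (g n)" for i' n
    using sub[OF that] NMs[of i'] Ng[of n] by linarith
  have cb: "(norm (P (g n) - P (g k)))\<^sup>2 \<le> 1 * (1 / real (Suc n) + 1 / real (Suc k))" for n k
  proof (cases "n \<le> k")
    case True
    then have "(norm (P (g k) - P (g n)))\<^sup>2 \<le> 1 / real (Suc n)" using close gmono by blast
    then show ?thesis by (simp add: norm_minus_commute add_increasing2)
  next
    case False
    then have "(norm (P (g n) - P (g k)))\<^sup>2 \<le> 1 / real (Suc k)" using close gmono by simp
    then show ?thesis by (simp add: add_increasing)
  qed
  obtain p where pl: "(\<lambda>n. P (g n)) \<longlonglongrightarrow> p"
    using cauchy_sq_lim[of "\<lambda>n. P (g n)" 1] cb by blast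
  have "p \<in> D i" for i
  proof -
    define q where "q n = P (jn (g n) i)" for n
    have qD: "q n \<in> D i" for n unfolding q_def using PD jn by blast
    have qc: "(norm (q n - P (g n)))\<^sup>2 \<le> 1 / real (Suc n)" for n
      unfolding q_def using close jn by blast
    have "(\<lambda>n. q n - P (g n)) \<longlonglongrightarrow> 0"
    proof (rule Lim_null_comparison)
      show "\<forall>\<^sub>F n in sequentially. norm (q n - P (g n)) \<le> sqrt (1 / real (Suc n))"
        using qc by (intro always_eventually allI real_le_rsqrt) auto
      have "(\<lambda>n. sqrt (1 / real (Suc n))) \<longlonglongrightarrow> sqrt 0"
        by (intro tendsto_real_sqrt lim_Suc_inv)
      then show "(\<lambda>n. sqrt (1 / real (Suc n))) \<longlonglongrightarrow> 0" by simp
    qed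
    then have "(\<lambda>n. (q n - P (g n)) + P (g n)) \<longlonglongrightarrow> 0 + p" by (intro tendsto_add pl)
    then have "q \<longlonglongrightarrow> p" by simp
    then show ?thesis by (rule closed_sequentially[where f=q, OF cl qD])
  qed
  then show ?thesis by blast
qed



lemma ls_terminates:
  fixes A1 A2 :: "'a::{real_inner,complete_space} \<Rightarrow> 'a" and B :: "'a \<Rightarrow> 'a set"
  assumes mm: "mm_prop B" and th: "0 < \<theta>" "\<theta> < 1" and dl: "0 < \<delta>" and al: "0 < \<alpha>"
    and uc: "uniformly_continuous_on UNIV A2"
  shows "\<exists>j. let s = \<alpha> * \<theta> ^ j; z = fb_point (\<lambda>u. A1 u + A2 u) B s x in
      s * inner (A2 x - A2 z) (x - z) \<le> \<delta> * (norm (x - z))\<^sup>2"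
proof (rule ccontr)
  assume nex: "\<not> ?thesis"
  define a where "a = A1 x + A2 x"
  define s where "s j = \<alpha> * \<theta> ^ j" for j :: nat
  define z where "z j = resolvent (s j) B (x - s j *\<^sub>R a)" for j
  have fbz: "fb_point (\<lambda>u. A1 u + A2 u) B (s j) x = z j" for j
    unfolding fb_point_def z_def a_def by simp
  have fail: "s j * inner (A2 x - A2 (z j)) (x - z j) > \<delta> * (norm (x - z j))\<^sup>2" for j
  proof -
    have "\<not> (s j * inner (A2 x - A2 (fb_point (\<lambda>u. A1 u + A2 u) B (s j) x)) (x - fb_point (\<lambda>u. A1 u + A2 u) B (s j) x)
        \<le> \<delta> * (norm (x - fb_point (\<lambda>u. A1 u + A2 u) B (s j) x))\<^sup>2)"
      using nex unfolding s_def Let_def by blast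
    then show ?thesis unfolding fbz by simp
  qed
  have s0: "s 0 = \<alpha>" unfolding s_def by simp
  have spos: "0 < s j" for j unfolding s_def using al th by simp
  have sle: "s j \<le> \<alpha>" for j unfolding s_def using al th by (simp add: power_le_one)
  have zne: "norm (x - z j) > 0" for j
  proof -
    have "z j \<noteq> x"
    proof
      assume "z j = x"
      then show False using fail[of j] by simp
    qed
    then show ?thesis by simp
  qed
  define R0 where "R0 = norm (x - z 0)"
  define \<rho> where "\<rho> = R0 / \<alpha>"
  have rho: "\<rho> > 0" unfolding \<rho>_def R0_def using zne[of 0] al by simp
  have fbm: "norm (x - z j) \<le> R0 \<and> R0 * s j \<le> norm (x - z j) * \<alpha>" for j
    using fb_mono[OF mm spos[of j] sle[of j], of x a] unfolding z_def R0_def s0[symmetric] by simp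
  have lowz: "\<rho> * s j \<le> norm (x - z j)" for j
  proof -
    have "R0 * s j \<le> norm (x - z j) * \<alpha>" using fbm by blast
    then show ?thesis unfolding \<rho>_def using al by (simp add: field_simps)
  qed
  obtain C where C: "C > 0" "\<And>u v. norm (A2 u - A2 v) \<le> C * (1 + norm (u - v))"
    using growth[OF uc] by blast
  have upper: "\<delta> * norm (x - z j) < s j * norm (A2 x - A2 (z j))" for j
  proof -
    have "\<delta> * (norm (x - z j))\<^sup>2 < s j * inner (A2 x - A2 (z j)) (x - z j)" using fail by blast
    also have "\<dots> \<le> s j * (norm (A2 x - A2 (z j)) * norm (x - z j))"
      using spos[of j] by (intro mult_left_mono norm_cauchy_schwarz) auto
    finally have "norm (x - z j) * (\<delta> * norm (x - z j)) < norm (x - z j) * (s j * norm (A2 x - A2 (z j)))"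
      by (simp add: power2_eq_square algebra_simps)
    then show ?thesis using zne[of j] by (simp add: mult_less_cancel_left_pos)
  qed
  have bndA: "norm (A2 x - A2 (z j)) \<le> C * (1 + R0)" for j
  proof -
    have "norm (A2 x - A2 (z j)) \<le> C * (1 + norm (x - z j))" by (rule C(2))
    also have "\<dots> \<le> C * (1 + R0)" using C(1) fbm[of j] by (intro mult_left_mono) auto
    finally show ?thesis .
  qed
  obtain \<eta> where eta: "\<eta> > 0" "\<And>u v. dist u v < \<eta> \<Longrightarrow> dist (A2 u) (A2 v) < \<delta> * \<rho>"
    using uc unfolding uniformly_continuous_on_def using dl rho
    by (metis UNIV_I mult_pos_pos)
  define K where "K = \<alpha> * C * (1 + R0) / \<delta>"
  have "1 + R0 > 0" unfolding R0_def by (smt (verit) norm_ge_zero)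
  then have K: "K > 0" unfolding K_def using al C(1) dl by (intro divide_pos_pos mult_pos_pos) auto
  obtain j where j: "\<theta> ^ j < \<eta> / K" using real_arch_pow_inv[of "\<eta> / K" \<theta>] eta K th by auto
  have "\<delta> * norm (x - z j) < s j * (C * (1 + R0))"
    using upper[of j] bndA[of j] spos[of j] by (smt (verit) mult_left_mono)
  then have "norm (x - z j) < s j * (C * (1 + R0)) / \<delta>" using dl by (simp add: field_simps)
  also have "\<dots> = \<theta> ^ j * K" unfolding s_def K_def by simp
  also have "\<dots> < \<eta>" using j K by (simp add: field_simps)
  finally have "dist x (z j) < \<eta>" by (simp add: dist_norm)
  then have "norm (A2 x - A2 (z j)) < \<delta> * \<rho>" using eta(2) by (simp add: dist_norm)
  then have "s j * norm (A2 x - A2 (z j)) < s j * (\<delta> * \<rho>)" using spos[of j] by simp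
  moreover have "\<delta> * (\<rho> * s j) \<le> \<delta> * norm (x - z j)" using lowz[of j] dl by simp
  ultimately show False using upper[of j] by (simp add: algebra_simps)
qed



lemma quad_bound:
  fixes \<beta> G D :: real
  assumes "\<beta> > 0"
  shows "- \<beta> * G\<^sup>2 + G * D \<le> D\<^sup>2 / (4 * \<beta>)"
proof -
  have "0 \<le> (2 * \<beta> * G - D)\<^sup>2" by simp
  then have "4 * \<beta> * (- \<beta> * G\<^sup>2 + G * D) \<le> D\<^sup>2"
    by (simp add: power2_eq_square algebra_simps)
  then show ?thesis using assms by (simp add: field_simps mult.commute)
qed

lemma halfspace_form: "{z. inner w (z - c) \<le> r} = {z. inner w z \<le> r + inner w c}"
  by (auto simp: inner_diff_right)

lemma T_closed_convex: "closed (T_set A2 \<delta>b \<alpha> x xb)" "convex (T_set A2 \<delta>b \<alpha> x xb)"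
  unfolding T_set_def halfspace_form by (rule closed_halfspace_le, rule convex_halfspace_le)

lemma G_closed_convex: "closed (Gamma_set x0 x)" "convex (Gamma_set x0 x)"
  unfolding Gamma_set_def halfspace_form by (rule closed_halfspace_le, rule convex_halfspace_le)

locale m2 =
  fixes A1 A2 :: "'a::{real_inner,complete_space} \<Rightarrow> 'a"
    and B :: "'a \<Rightarrow> 'a set"
    and \<beta> \<theta> \<delta> \<delta>b \<alpha>0 :: real
    and x :: "nat \<Rightarrow> 'a" and alpha :: "nat \<Rightarrow> real"
  assumes beta: "\<beta> > 0" and coco: "cocoercive \<beta> A1"
    and mA2: "maximally_monotone (\<lambda>u. {A2 u})" and uc: "uniformly_continuous_on UNIV A2"
    and mB: "maximally_monotone B"
    and th0: "0 < \<theta>" and th1: "\<theta> < 1" and dl0: "0 < \<delta>" and dl1: "\<delta> < 1"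
    and db: "\<delta>b > 0" and dsum: "1 - \<delta> - \<delta>b > 0"
    and a0: "\<alpha>0 > 0" and a0le: "\<alpha>0 \<le> 4 * \<beta> * \<delta>b"
    and Zne: "zer_sum (\<lambda>u. A1 u + A2 u) B \<noteq> {}"
    and Zcl: "closed (zer_sum (\<lambda>u. A1 u + A2 u) B)"
    and Zcv: "convex (zer_sum (\<lambda>u. A1 u + A2 u) B)"
    and meth: "method2_seq A1 A2 B \<theta> \<delta> \<delta>b \<alpha>0 x alpha"
begin

abbreviation AA where "AA \<equiv> (\<lambda>u. A1 u + A2 u)"
abbreviation Z where "Z \<equiv> zer_sum (\<lambda>u. A1 u + A2 u) B"

definition J where "J k = ls_index A1 A2 B \<theta> \<delta> (alpha k) (x k)"
definition a where "a k = alpha (Suc k)"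
definition xb where "xb k = fb_point AA B (a k) (x k)"
definition CC where "CC k = T_set A2 \<delta>b (a k) (x k) (xb k) \<inter> Gamma_set (x 0) (x k)"

lemma mmB: "mm_prop B" by (rule maxmono_mm_prop[OF mB])

lemma monB: "u \<in> B p \<Longrightarrow> v \<in> B q \<Longrightarrow> inner (u - v) (p - q) \<ge> 0"
  using mB unfolding maximally_monotone_def monotone_op_def by blast

lemma monA2: "inner (A2 u - A2 v) (u - v) \<ge> 0"
  using mA2 unfolding maximally_monotone_def monotone_op_def by blast

lemma monA1: "inner (A1 u - A1 v) (u - v) \<ge> 0"
  by (rule coco_mono[OF beta coco])

lemma lipA1: "\<beta> * norm (A1 u - A1 v) \<le> norm (u - v)"
  by (rule coco_lip[OF beta coco])

lemma alpha0: "alpha 0 = \<alpha>0" using meth unfolding method2_seq_def by blast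

lemma alpha_rec: "alpha (Suc k) = alpha k * \<theta> ^ J k"
  using meth unfolding method2_seq_def J_def by blast

lemma x_rec: "x (Suc k) = proj (CC k) (x 0)"
  using meth unfolding method2_seq_def CC_def xb_def a_def Let_def by metis

lemma alpha_bounds: "0 < alpha k \<and> alpha k \<le> \<alpha>0"
proof (induction k)
  case 0 then show ?case using alpha0 a0 by simp
next
  case (Suc k)
  have "0 < \<theta> ^ J k" "\<theta> ^ J k \<le> 1" using th0 th1 by (auto simp: power_le_one)
  have c1: "alpha k * \<theta> ^ J k \<le> alpha k" using Suc \<open>\<theta> ^ J k \<le> 1\<close>
    by (metis mult.right_neutral mult_left_mono less_imp_le)
  have c2: "0 < alpha k * \<theta> ^ J k" using Suc \<open>0 < \<theta> ^ J k\<close> by simp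
  show ?case unfolding alpha_rec[of k] using c1 c2 Suc by linarith
qed

lemma a_pos: "0 < a k" and a_le: "a k \<le> \<alpha>0"
  unfolding a_def using alpha_bounds by auto

lemma res_k: "\<exists>b\<in>B (xb k). x k - a k *\<^sub>R AA (x k) = xb k + a k *\<^sub>R b"
  using resolvent_prop[OF mmB a_pos[of k], of "x k - a k *\<^sub>R AA (x k)"]
  unfolding xb_def fb_point_def by simp

definition LSQ where "LSQ k j \<longleftrightarrow> (let s = alpha k * \<theta> ^ j; z = fb_point AA B s (x k) in
      s * inner (A2 (x k) - A2 z) (x k - z) \<le> \<delta> * (norm (x k - z))\<^sup>2)"

lemma J_Least: "J k = (LEAST j. LSQ k j)"
  unfolding J_def ls_index_def LSQ_def by simp

lemma LSQ_ex: "\<exists>j. LSQ k j"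
  unfolding LSQ_def using ls_terminates[OF mmB th0 th1 dl0 alpha_bounds[THEN conjunct1] uc] by blast

lemma ls_accept: "a k * inner (A2 (x k) - A2 (xb k)) (x k - xb k) \<le> \<delta> * (norm (x k - xb k))\<^sup>2"
proof -
  have "LSQ k (J k)" unfolding J_Least using LSQ_ex by (rule LeastI_ex)
  then show ?thesis unfolding LSQ_def Let_def xb_def a_def alpha_rec[of k] .
qed

lemma ls_reject:
  assumes "J k \<ge> 1"
  shows "alpha k * \<theta> ^ (J k - 1) * inner (A2 (x k) - A2 (fb_point AA B (alpha k * \<theta> ^ (J k - 1)) (x k)))
      (x k - fb_point AA B (alpha k * \<theta> ^ (J k - 1)) (x k))
    > \<delta> * (norm (x k - fb_point AA B (alpha k * \<theta> ^ (J k - 1)) (x k)))\<^sup>2"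
proof -
  have "J k - 1 < J k" using assms by simp
  then have "\<not> LSQ k (J k - 1)" unfolding J_Least by (rule not_less_Least)
  then show ?thesis unfolding LSQ_def Let_def by simp
qed

lemma Z_sub_T: "Z \<subseteq> T_set A2 \<delta>b (a k) (x k) (xb k)"
proof
  fix xs assume "xs \<in> Z"
  then obtain bs where bs: "bs \<in> B xs" "AA xs + bs = 0" unfolding zer_sum_def by blast
  obtain b where b: "b \<in> B (xb k)" "x k - a k *\<^sub>R AA (x k) = xb k + a k *\<^sub>R b" using res_k by blast
  define al where "al = a k"
  have al: "0 < al" "al \<le> 4 * \<beta> * \<delta>b" unfolding al_def using a_pos a_le a0le by (auto intro: order_trans)
  define d where "d = x k - xb k"
  have dv: "d = al *\<^sub>R (b + AA (x k))"
    using b(2) unfolding d_def al_def by (simp add: algebra_simps)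
  have w: "(1 / al) *\<^sub>R d - (A2 (x k) - A2 (xb k)) = (b - bs) + (A1 (x k) - A1 xs) + (A2 (xb k) - A2 xs)"
  proof -
    have e1: "(1 / al) *\<^sub>R d = b + (A1 (x k) + A2 (x k))" using al unfolding dv by simp
    have "A1 xs + A2 xs + bs = 0" using bs(2) by simp
    then have e2: "bs = - (A1 xs + A2 xs)" using add_eq_0_iff[of "A1 xs + A2 xs" bs] by simp
    show ?thesis unfolding e1 e2 by (simp add: algebra_simps)
  qed
  define g where "g = A1 (x k) - A1 xs"
  have i1: "inner (b - bs) (xs - xb k) \<le> 0"
    using monB[OF b(1) bs(1)] by (simp add: inner_diff_right inner_commute)
  have i2: "inner (A2 (xb k) - A2 xs) (xs - xb k) \<le> 0"
    using monA2[of "xb k" xs] by (simp add: inner_diff_right)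
  have i3: "inner g (xs - xb k) \<le> - \<beta> * (norm g)\<^sup>2 + norm g * norm d"
  proof -
    have "inner g (xs - xb k) = - inner g (x k - xs) + inner g d"
      unfolding d_def by (simp add: inner_diff_right)
    moreover have "\<beta> * (norm g)\<^sup>2 \<le> inner g (x k - xs)" using coco unfolding cocoercive_def g_def by blast
    moreover have "inner g d \<le> norm g * norm d" by (rule norm_cauchy_schwarz)
    ultimately show ?thesis by linarith
  qed
  have i4: "- \<beta> * (norm g)\<^sup>2 + norm g * norm d \<le> (norm d)\<^sup>2 / (4 * \<beta>)" by (rule quad_bound[OF beta])
  have i5: "(norm d)\<^sup>2 / (4 * \<beta>) \<le> (\<delta>b / al) * (norm d)\<^sup>2"
  proof -
    have "1 / (4 * \<beta>) \<le> \<delta>b / al" using al beta db by (simp add: field_simps)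
    then show ?thesis by (metis divide_inverse_commute inverse_eq_divide mult_right_mono zero_le_power2 times_divide_eq_left mult_1)
  qed
  have "inner ((1 / al) *\<^sub>R d - (A2 (x k) - A2 (xb k))) (xs - xb k)
      = inner (b - bs) (xs - xb k) + inner g (xs - xb k) + inner (A2 (xb k) - A2 xs) (xs - xb k)"
    unfolding w g_def by (simp add: inner_add_left)
  also have "\<dots> \<le> (\<delta>b / al) * (norm d)\<^sup>2" using i1 i2 i3 i4 i5 by linarith
  finally show "xs \<in> T_set A2 \<delta>b (a k) (x k) (xb k)"
    unfolding T_set_def al_def d_def by simp
qed

lemma CC_closed_convex: "closed (CC k)" "convex (CC k)"
  unfolding CC_def by (intro closed_Int T_closed_convex G_closed_convex, intro convex_Int T_closed_convex G_closed_convex)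

lemma Z_sub_G: "Z \<subseteq> Gamma_set (x 0) (x k)"
proof (induction k)
  case 0
  then show ?case unfolding Gamma_set_def by simp
next
  case (Suc k)
  have ZC: "Z \<subseteq> CC k" unfolding CC_def using Suc Z_sub_T by blast
  then have ne: "CC k \<noteq> {}" using Zne by blast
  have "\<forall>y\<in>CC k. inner (x 0 - x (Suc k)) (y - x (Suc k)) \<le> 0"
    unfolding x_rec using proj_props(3)[OF CC_closed_convex ne] .
  then show ?case using ZC unfolding Gamma_set_def by auto
qed

lemma Z_sub_CC: "Z \<subseteq> CC k"
  unfolding CC_def using Z_sub_G Z_sub_T by blast

lemma CC_ne: "CC k \<noteq> {}" using Z_sub_CC Zne by blast

lemma step_in: "x (Suc k) \<in> CC k"
  unfolding x_rec using proj_props(1)[OF CC_closed_convex CC_ne] .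

lemma step_min: "\<forall>y\<in>CC k. norm (x 0 - x (Suc k)) \<le> norm (x 0 - y)"
  unfolding x_rec using proj_props(2)[OF CC_closed_convex CC_ne] .

end



lemma dlim:
  fixes D E :: "nat \<Rightarrow> real"
  assumes c: "c > 0" and K: "K > 0" and D0: "\<And>k. D k \<ge> 0" and E0: "\<And>k. E k \<ge> 0"
    and El: "E \<longlonglongrightarrow> 0" and ineq: "\<And>k. c * (D k)\<^sup>2 \<le> K * (1 + D k) * E k"
  shows "D \<longlonglongrightarrow> 0"
proof (rule LIMSEQ_I)
  fix r :: real assume r: "0 < r"
  define e where "e = min r 1"
  have e: "0 < e" "e \<le> 1" "e \<le> r" unfolding e_def using r by auto
  have "c * e\<^sup>2 / (2 * K) > 0" using c K e by simp
  then obtain no where no: "\<And>n. n \<ge> no \<Longrightarrow> norm (E n - 0) < c * e\<^sup>2 / (2 * K)"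
    using LIMSEQ_D[OF El] by blast
  have "D n < e" if n: "n \<ge> no" for n
  proof (rule ccontr)
    assume "\<not> D n < e"
    then have De: "e \<le> D n" by simp
    have En: "E n < c * e\<^sup>2 / (2 * K)" using no[OF n] E0[of n] by simp
    have KD: "K * (1 + D n) > 0" using K D0[of n] by simp
    have "K * (1 + D n) * E n < K * (1 + D n) * (c * e\<^sup>2 / (2 * K))"
      using En KD by (intro mult_strict_left_mono) auto
    also have "\<dots> = c * ((1 + D n) * e\<^sup>2) / 2" using K by (simp add: field_simps)
    finally have h1: "c * (D n)\<^sup>2 < c * ((1 + D n) * e\<^sup>2) / 2" using ineq[of n] by linarith
    have q1: "e\<^sup>2 \<le> (D n)\<^sup>2" using De e by (intro power_mono) auto
    have q2: "e\<^sup>2 * D n \<le> e * D n"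
    proof -
      have "e\<^sup>2 \<le> e" using e by (simp add: power2_eq_square mult_le_cancel_left1)
      then show ?thesis using D0[of n] by (intro mult_right_mono) auto
    qed
    have q3: "e * D n \<le> D n * D n" using De D0[of n] e by (intro mult_right_mono) auto
    have "(1 + D n) * e\<^sup>2 \<le> 2 * (D n)\<^sup>2"
    proof -
      have "(1 + D n) * e\<^sup>2 = e\<^sup>2 + e\<^sup>2 * D n" by (simp add: algebra_simps)
      also have "\<dots> \<le> (D n)\<^sup>2 + D n * D n" using q1 q2 q3 by linarith
      also have "\<dots> = 2 * (D n)\<^sup>2" by (simp add: power2_eq_square)
      finally show ?thesis .
    qed
    then have "c * ((1 + D n) * e\<^sup>2) \<le> c * (2 * (D n)\<^sup>2)" using c by (intro mult_left_mono) auto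
    then show False using h1 by simp
  qed
  then show "\<exists>no. \<forall>n\<ge>no. norm (D n - 0) < r" using e D0
    by (metis abs_of_nonneg diff_zero order_less_le_trans real_norm_def)
qed

context m2
begin

definition d where "d k = x k - xb k"
definition xbar where "xbar = proj Z (x 0)"
definition N where "N k = norm (x k - x 0)"

lemma xbar_in: "xbar \<in> Z" unfolding xbar_def using proj_props(1)[OF Zcl Zcv Zne] .
lemma xbar_min: "\<forall>y\<in>Z. norm (x 0 - xbar) \<le> norm (x 0 - y)"
  unfolding xbar_def using proj_props(2)[OF Zcl Zcv Zne] .

lemma N_le: "N k \<le> norm (xbar - x 0)"
proof (cases k)
  case 0 then show ?thesis unfolding N_def by simp
next
  case (Suc j)
  have "xbar \<in> CC j" using xbar_in Z_sub_CC by blast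
  then have "norm (x 0 - x (Suc j)) \<le> norm (x 0 - xbar)" using step_min by blast
  then show ?thesis unfolding N_def Suc by (simp add: norm_minus_commute)
qed

lemma N_step: "(N k)\<^sup>2 + (norm (x (Suc k) - x k))\<^sup>2 \<le> (N (Suc k))\<^sup>2"
proof -
  have "x (Suc k) \<in> Gamma_set (x 0) (x k)" using step_in unfolding CC_def by blast
  then have i: "inner (x 0 - x k) (x (Suc k) - x k) \<le> 0" unfolding Gamma_set_def by simp
  have e: "x (Suc k) - x 0 = (x k - x 0) + (x (Suc k) - x k)" by simp
  have "(N (Suc k))\<^sup>2 = (N k)\<^sup>2 + 2 * inner (x k - x 0) (x (Suc k) - x k) + (norm (x (Suc k) - x k))\<^sup>2"
    unfolding N_def e sumnorm ..
  moreover have "inner (x k - x 0) (x (Suc k) - x k) = - inner (x 0 - x k) (x (Suc k) - x k)"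
    by (simp add: inner_diff_left)
  ultimately show ?thesis using i by linarith
qed

lemma N_nonneg: "N k \<ge> 0" unfolding N_def by simp

lemma N_inc: "incseq N"
proof (rule incseq_SucI)
  fix k
  have "(N k)\<^sup>2 \<le> (N (Suc k))\<^sup>2" using N_step[of k] zero_le_power2[of "norm (x (Suc k) - x k)"] by linarith
  then show "N k \<le> N (Suc k)" using N_nonneg by (meson power2_le_imp_le)
qed

definition L where "L = lim N"

lemma N_lim: "N \<longlonglongrightarrow> L" and N_le_L: "N k \<le> L"
proof -
  obtain L' where "N \<longlonglongrightarrow> L'" "\<forall>i. N i \<le> L'"
    using incseq_convergent[OF N_inc, of "norm (xbar - x 0)"] N_le by blast
  moreover then have "L = L'" unfolding L_def by (simp add: limI)
  ultimately show "N \<longlonglongrightarrow> L" "N k \<le> L" by auto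
qed

lemma dx0: "(\<lambda>k. norm (x (Suc k) - x k)) \<longlonglongrightarrow> 0"
proof -
  have "(\<lambda>k. sqrt ((N (Suc k))\<^sup>2 - (N k)\<^sup>2)) \<longlonglongrightarrow> sqrt (L\<^sup>2 - L\<^sup>2)"
    by (intro tendsto_intros N_lim LIMSEQ_Suc[OF N_lim])
  then have l: "(\<lambda>k. sqrt ((N (Suc k))\<^sup>2 - (N k)\<^sup>2)) \<longlonglongrightarrow> 0" by simp
  have "(\<lambda>k. x (Suc k) - x k) \<longlonglongrightarrow> 0"
  proof (rule Lim_null_comparison[OF _ l])
    show "\<forall>\<^sub>F k in sequentially. norm (x (Suc k) - x k) \<le> sqrt ((N (Suc k))\<^sup>2 - (N k)\<^sup>2)"
      using N_step by (intro always_eventually allI real_le_rsqrt) (simp add: algebra_simps)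
  qed
  then show ?thesis using tendsto_norm_zero by blast
qed

lemma d_key: "(1 - \<delta> - \<delta>b) * (norm (d k))\<^sup>2 \<le> (norm (d k) + a k * norm (A2 (x k) - A2 (xb k))) * norm (x (Suc k) - x k)"
proof -
  define al where "al = a k"
  have al: "0 < al" unfolding al_def using a_pos by simp
  define u where "u = (1 / al) *\<^sub>R d k - (A2 (x k) - A2 (xb k))"
  have T: "inner u (x (Suc k) - xb k) \<le> (\<delta>b / al) * (norm (d k))\<^sup>2"
    using step_in[of k] unfolding CC_def T_set_def u_def d_def al_def by simp
  have acc: "al * inner (A2 (x k) - A2 (xb k)) (d k) \<le> \<delta> * (norm (d k))\<^sup>2"
    using ls_accept[of k] unfolding al_def d_def .
  have ud: "al * inner u (d k) = (norm (d k))\<^sup>2 - al * inner (A2 (x k) - A2 (xb k)) (d k)"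
    unfolding u_def using al by (simp add: inner_diff_left power2_norm_eq_inner algebra_simps)
  have sp: "x k - x (Suc k) = d k - (x (Suc k) - xb k)" unfolding d_def by simp
  have "al * inner u (x k - x (Suc k)) = al * inner u (d k) - al * inner u (x (Suc k) - xb k)"
    unfolding sp by (simp add: inner_diff_right algebra_simps)
  moreover have "al * inner u (x (Suc k) - xb k) \<le> \<delta>b * (norm (d k))\<^sup>2"
  proof -
    have "al * inner u (x (Suc k) - xb k) \<le> al * ((\<delta>b / al) * (norm (d k))\<^sup>2)"
      using T al by (intro mult_left_mono) auto
    then show ?thesis using al by simp
  qed
  ultimately have low: "(1 - \<delta> - \<delta>b) * (norm (d k))\<^sup>2 \<le> al * inner u (x k - x (Suc k))"
    using ud acc by (simp add: algebra_simps)
  have "al * inner u (x k - x (Suc k)) \<le> al * (norm u * norm (x k - x (Suc k)))"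
    using al by (intro mult_left_mono norm_cauchy_schwarz) auto
  also have "al * norm u \<le> norm (d k) + al * norm (A2 (x k) - A2 (xb k))"
  proof -
    have "norm u \<le> norm ((1 / al) *\<^sub>R d k) + norm (A2 (x k) - A2 (xb k))"
      unfolding u_def by (rule norm_triangle_ineq4)
    also have "norm ((1 / al) *\<^sub>R d k) = norm (d k) / al" using al by simp
    finally have "al * norm u \<le> al * (norm (d k) / al + norm (A2 (x k) - A2 (xb k)))"
      using al by (intro mult_left_mono) auto
    then show ?thesis using al by (simp add: algebra_simps)
  qed
  then have "al * (norm u * norm (x k - x (Suc k))) \<le> (norm (d k) + al * norm (A2 (x k) - A2 (xb k))) * norm (x k - x (Suc k))"
    by (simp add: mult.assoc[symmetric] mult_right_mono)
  finally show ?thesis using low unfolding al_def by (simp add: norm_minus_commute)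
qed

lemma d_lim: "(\<lambda>k. norm (d k)) \<longlonglongrightarrow> 0"
proof -
  obtain C where C: "C > 0" "\<And>u v. norm (A2 u - A2 v) \<le> C * (1 + norm (u - v))"
    using growth[OF uc] by blast
  define K where "K = 1 + \<alpha>0 * C"
  have K: "K > 0" unfolding K_def using a0 C by (simp add: add_pos_pos)
  show ?thesis
  proof (rule dlim[OF dsum K _ _ dx0])
    fix k
    have "a k * norm (A2 (x k) - A2 (xb k)) \<le> \<alpha>0 * (C * (1 + norm (d k)))"
      using C(2)[of "x k" "xb k"] a_pos[of k] a_le[of k] C(1) unfolding d_def
      by (intro mult_mono) auto
    then have "norm (d k) + a k * norm (A2 (x k) - A2 (xb k)) \<le> K * (1 + norm (d k))"
      unfolding K_def by (simp add: algebra_simps)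
    then have "(norm (d k) + a k * norm (A2 (x k) - A2 (xb k))) * norm (x (Suc k) - x k)
        \<le> K * (1 + norm (d k)) * norm (x (Suc k) - x k)"
      by (intro mult_right_mono) auto
    then show "(1 - \<delta> - \<delta>b) * (norm (d k))\<^sup>2 \<le> K * (1 + norm (d k)) * norm (x (Suc k) - x k)"
      using d_key[of k] by linarith
  qed auto
qed

end



context m2
begin

lemma a_Suc: "a (Suc k) = a k * \<theta> ^ J (Suc k)"
  unfolding a_def by (rule alpha_rec)

lemma d_ev: "r > 0 \<Longrightarrow> \<exists>k1. \<forall>k\<ge>k1. norm (d k) < r"
  using LIMSEQ_D[OF d_lim] by fastforce

lemma ratio:
  assumes ep: "\<epsilon> > 0"
  shows "\<exists>k\<ge>k0. norm (d k) \<le> \<epsilon> * a k"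
proof (cases "\<exists>k1. \<forall>k\<ge>k1. J k = 0")
  case True
  then obtain k1 where k1: "\<And>k. k \<ge> k1 \<Longrightarrow> J k = 0" by blast
  have const: "a k = a k1" if "k1 \<le> k" for k
    using that
  proof (induction k rule: dec_induct)
    case base then show ?case by simp
  next
    case (step n)
    then show ?case using a_Suc[of n] k1[of "Suc n"] by simp
  qed
  have "\<epsilon> * a k1 > 0" using ep a_pos by simp
  then obtain k2 where k2: "\<And>k. k \<ge> k2 \<Longrightarrow> norm (d k) < \<epsilon> * a k1" using d_ev by blast
  define k where "k = max k0 (max k1 k2)"
  have kk: "k2 \<le> k" "k1 \<le> k" unfolding k_def by auto
  have "norm (d k) \<le> \<epsilon> * a k" using k2[OF kk(1)] const[OF kk(2)] by simp
  then show ?thesis unfolding k_def by (intro exI[of _ "max k0 (max k1 k2)"]) auto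
next
  case False
  then have infJ: "\<And>k1. \<exists>k\<ge>k1. J k \<ge> 1" by (metis not_less_eq_eq le0 nat_le_linear le_antisym not_le One_nat_def less_one)
  have "\<epsilon> * \<delta> * \<theta> > 0" using ep dl0 th0 by simp
  then obtain \<eta> where eta: "\<eta> > 0" "\<And>u v. dist u v < \<eta> \<Longrightarrow> dist (A2 u) (A2 v) < \<epsilon> * \<delta> * \<theta>"
    using uc unfolding uniformly_continuous_on_def by (metis UNIV_I)
  have "\<eta> * \<theta> > 0" using eta th0 by simp
  then obtain k1 where k1: "\<And>k. k \<ge> k1 \<Longrightarrow> norm (d k) < \<eta> * \<theta>" using d_ev by blast
  obtain k where k: "k \<ge> max k0 k1" "J k \<ge> 1" using infJ by blast
  define s' where "s' = alpha k * \<theta> ^ (J k - 1)"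
  define z' where "z' = fb_point AA B s' (x k)"
  have sp: "s' > 0" unfolding s'_def using alpha_bounds th0 by simp
  have ak: "a k = s' * \<theta>"
  proof -
    have "J k = Suc (J k - 1)" using k by simp
    then have "\<theta> ^ J k = \<theta> ^ (J k - 1) * \<theta>" by (metis power_Suc2)
    then show ?thesis unfolding a_def alpha_rec s'_def by simp
  qed
  have akle: "a k \<le> s'" unfolding ak using sp th1 by (simp add: mult_le_cancel_left1 less_imp_le)
  have fbm: "norm (x k - xb k) \<le> norm (x k - z') \<and> norm (x k - z') * a k \<le> norm (x k - xb k) * s'"
    using fb_mono[OF mmB a_pos[of k] akle, of "x k" "AA (x k)"]
    unfolding xb_def z'_def fb_point_def by simp
  have "norm (x k - z') * \<theta> \<le> norm (d k)"
  proof -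
    have "s' * (norm (x k - z') * \<theta>) \<le> s' * norm (d k)"
      using fbm unfolding ak d_def by (simp add: algebra_simps)
    then show ?thesis using sp by simp
  qed
  moreover have "norm (d k) < \<eta> * \<theta>" using k1 k by simp
  ultimately have "norm (x k - z') * \<theta> < \<eta> * \<theta>" by linarith
  then have "norm (x k - z') < \<eta>" using th0 by (simp add: mult_less_cancel_right)
  then have A2s: "norm (A2 (x k) - A2 z') < \<epsilon> * \<delta> * \<theta>" using eta(2) by (simp add: dist_norm)
  have rej: "s' * inner (A2 (x k) - A2 z') (x k - z') > \<delta> * (norm (x k - z'))\<^sup>2"
    using ls_reject[OF k(2)] unfolding s'_def z'_def .
  have nz: "norm (x k - z') > 0"
  proof -
    have "x k \<noteq> z'" using rej by auto
    then show ?thesis by simp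
  qed
  have "\<delta> * (norm (x k - z'))\<^sup>2 < s' * (norm (A2 (x k) - A2 z') * norm (x k - z'))"
    using rej sp by (smt (verit) mult_left_mono norm_cauchy_schwarz)
  then have "norm (x k - z') * (\<delta> * norm (x k - z')) < norm (x k - z') * (s' * norm (A2 (x k) - A2 z'))"
    by (simp add: power2_eq_square algebra_simps)
  then have "\<delta> * norm (x k - z') < s' * norm (A2 (x k) - A2 z')" using nz by simp
  also have "\<dots> \<le> s' * (\<epsilon> * \<delta> * \<theta>)" using A2s sp by simp
  also have "\<dots> = \<delta> * (\<epsilon> * a k)" unfolding ak by simp
  finally have "norm (x k - z') < \<epsilon> * a k" using dl0 by simp
  then have "norm (d k) \<le> \<epsilon> * a k" using fbm unfolding d_def by simp
  then show ?thesis using k by auto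
qed

definition bk where "bk k = (1 / a k) *\<^sub>R (x k - a k *\<^sub>R AA (x k) - xb k)"
definition e where "e k = AA (xb k) + bk k"

lemma bk_in: "bk k \<in> B (xb k)"
proof -
  obtain b where b: "b \<in> B (xb k)" "x k - a k *\<^sub>R AA (x k) = xb k + a k *\<^sub>R b" using res_k by blast
  have "bk k = b" unfolding bk_def b(2) using a_pos[of k] by simp
  then show ?thesis using b by simp
qed

lemma e_bound: "norm (e k) \<le> norm (d k) / a k + norm (d k) / \<beta> + norm (A2 (x k) - A2 (xb k))"
proof -
  have ak: "a k > 0" using a_pos by simp
  have "bk k = (1 / a k) *\<^sub>R d k - AA (x k)"
    unfolding bk_def d_def using ak by (simp add: scaleR_diff_right algebra_simps)
  then have ee: "e k = (1 / a k) *\<^sub>R d k - (A1 (x k) - A1 (xb k)) - (A2 (x k) - A2 (xb k))"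
    unfolding e_def by (simp add: algebra_simps)
  have "norm (e k) \<le> norm ((1 / a k) *\<^sub>R d k) + norm (A1 (x k) - A1 (xb k)) + norm (A2 (x k) - A2 (xb k))"
    unfolding ee by (smt (verit) norm_triangle_ineq4)
  moreover have "norm ((1 / a k) *\<^sub>R d k) = norm (d k) / a k" using ak by simp
  moreover have "norm (A1 (x k) - A1 (xb k)) \<le> norm (d k) / \<beta>"
    using lipA1[of "x k" "xb k"] beta unfolding d_def by (simp add: field_simps)
  ultimately show ?thesis by linarith
qed

lemma approx:
  assumes ep: "\<epsilon> > 0"
  shows "\<exists>k. norm (d k) \<le> \<epsilon> \<and> norm (e k) \<le> \<epsilon>"
proof -
  have "\<epsilon> / 3 > 0" using ep by simp
  then obtain \<eta> where eta: "\<eta> > 0" "\<And>u v. dist u v < \<eta> \<Longrightarrow> dist (A2 u) (A2 v) < \<epsilon> / 3"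
    using uc unfolding uniformly_continuous_on_def by (metis UNIV_I)
  have "min (min \<epsilon> \<eta>) (\<beta> * \<epsilon> / 3) > 0" using ep eta beta by simp
  then obtain k1 where k1: "\<And>k. k \<ge> k1 \<Longrightarrow> norm (d k) < min (min \<epsilon> \<eta>) (\<beta> * \<epsilon> / 3)"
    using d_ev by blast
  obtain k where k: "k \<ge> k1" "norm (d k) \<le> \<epsilon> / 3 * a k" using ratio[OF \<open>\<epsilon> / 3 > 0\<close>] by blast
  have dk: "norm (d k) < \<epsilon>" "norm (d k) < \<eta>" "norm (d k) < \<beta> * \<epsilon> / 3" using k1[OF k(1)] by auto
  have t1: "norm (d k) / a k \<le> \<epsilon> / 3" using k(2) a_pos[of k] by (simp add: divide_le_eq)
  have t2: "norm (d k) / \<beta> \<le> \<epsilon> / 3" using dk(3) beta by (simp add: divide_le_eq mult.commute)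
  have t3: "norm (A2 (x k) - A2 (xb k)) < \<epsilon> / 3"
    using eta(2)[of "x k" "xb k"] dk(2) unfolding d_def by (simp add: dist_norm)
  have "norm (e k) \<le> \<epsilon>" using e_bound[of k] t1 t2 t3 by linarith
  then show ?thesis using dk by (intro exI[of _ k]) auto
qed

end



lemma lim_aux:
  fixes c r :: real
  assumes "\<And>n. c \<le> r + 1 / real (Suc n)"
  shows "c \<le> r"
proof (rule ccontr)
  assume "\<not> c \<le> r"
  then have "0 < c - r" by simp
  then obtain n where n: "n > 0" "inverse (real n) < c - r" using ex_inverse_of_nat_less by blast
  have "1 / real (Suc n) \<le> inverse (real n)" using n(1) by (simp add: inverse_eq_divide frac_le)
  then show False using assms[of n] n(2) by linarith
qed

lemma cball_mono_r: "r \<le> r' \<Longrightarrow> cball c r \<subseteq> cball c r'"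
  by (auto simp: mem_cball)

context m2
begin

definition Hs where "Hs n p = (if snd p \<in> B (fst p) then
   {z. inner (AA (fst p) + snd p) z \<le> inner (AA (fst p) + snd p) (fst p) + 1 / real (Suc n)} else UNIV)"

definition Dset where "Dset i = cball (x 0) (L + 1 / real (Suc (snd i))) \<inter> (\<Inter>p\<in>set (fst i). Hs (snd i) p)"

definition jn where "jn i i' = (fst i @ fst i', max (snd i) (snd i'))"

lemma Hs_cc: "closed (Hs n p)" "convex (Hs n p)"
  unfolding Hs_def by (auto intro: closed_halfspace_le convex_halfspace_le)

lemma Dset_cc: "closed (Dset i)" "convex (Dset i)"
  unfolding Dset_def using Hs_cc by (auto intro!: closed_Int closed_INT convex_Int convex_INT)

lemma Dset_bd: "Dset i \<subseteq> cball (x 0) (L + 1)"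
proof -
  have "1 / real (Suc (snd i)) \<le> 1" by simp
  then have "cball (x 0) (L + 1 / real (Suc (snd i))) \<subseteq> cball (x 0) (L + 1)" by (intro cball_mono_r) simp
  then show ?thesis unfolding Dset_def by blast
qed

lemma Hs_mono: "n \<le> m \<Longrightarrow> Hs m p \<subseteq> Hs n p"
proof -
  assume "n \<le> m"
  then have "1 / real (Suc m) \<le> 1 / real (Suc n)" by (simp add: frac_le)
  then show ?thesis unfolding Hs_def by auto
qed

lemma Dset_jn: "Dset (jn i i') \<subseteq> Dset i \<inter> Dset i'"
proof -
  have r: "1 / real (Suc (max (snd i) (snd i'))) \<le> 1 / real (Suc (snd i))"
       "1 / real (Suc (max (snd i) (snd i'))) \<le> 1 / real (Suc (snd i'))"
    by (simp_all add: frac_le)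
  have c1: "cball (x 0) (L + 1 / real (Suc (max (snd i) (snd i')))) \<subseteq> cball (x 0) (L + 1 / real (Suc (snd i)))"
    using r(1) by (intro cball_mono_r) simp
  have c2: "cball (x 0) (L + 1 / real (Suc (max (snd i) (snd i')))) \<subseteq> cball (x 0) (L + 1 / real (Suc (snd i')))"
    using r(2) by (intro cball_mono_r) simp
  have h1: "Hs (max (snd i) (snd i')) p \<subseteq> Hs (snd i) p" for p by (rule Hs_mono) simp
  have h2: "Hs (max (snd i) (snd i')) p \<subseteq> Hs (snd i') p" for p by (rule Hs_mono) simp
  show ?thesis unfolding Dset_def jn_def using c1 c2 h1 h2 by fastforce
qed

lemma Dset_ne: "Dset i \<noteq> {}"
proof -
  obtain l n where i: "i = (l, n)" by (cases i)
  define R where "R = Max (insert 0 ((\<lambda>p. norm (fst p - x 0)) ` set l))"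
  have R: "norm (fst p - x 0) \<le> R" if "p \<in> set l" for p unfolding R_def using that by (intro Max_ge) auto
  have R0: "0 \<le> R" unfolding R_def by (intro Max_ge) auto
  have L0: "0 \<le> L" using N_le_L[of 0] N_nonneg[of 0] by simp
  define c where "c = 1 / real (Suc n)"
  have c: "0 < c" "c \<le> 1" unfolding c_def by auto
  define ep where "ep = min c (c / (R + L + 2))"
  have ep: "0 < ep" "ep \<le> c" "ep * (R + L + 1) \<le> c"
  proof -
    show "0 < ep" unfolding ep_def using c R0 L0 by simp
    show "ep \<le> c" unfolding ep_def by simp
    have "ep * (R + L + 1) \<le> c / (R + L + 2) * (R + L + 1)"
      unfolding ep_def using R0 L0 by (intro mult_right_mono) auto
    also have "\<dots> \<le> c / (R + L + 2) * (R + L + 2)"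
      using R0 L0 c by (intro mult_left_mono) auto
    also have "\<dots> = c" using R0 L0 by simp
    finally show "ep * (R + L + 1) \<le> c" .
  qed
  obtain k where k: "norm (d k) \<le> ep" "norm (e k) \<le> ep" using approx[OF ep(1)] by blast
  have dist0: "norm (x 0 - xb k) \<le> L + c"
  proof -
    have "norm (x 0 - xb k) \<le> norm (x 0 - x k) + norm (x k - xb k)"
      using norm_triangle_ineq[of "x 0 - x k" "x k - xb k"] by simp
    also have "norm (x 0 - x k) = N k" unfolding N_def by (simp add: norm_minus_commute)
    finally show ?thesis using N_le_L[of k] k(1) ep(2) unfolding d_def by linarith
  qed
  have "xb k \<in> Hs n p" if p: "p \<in> set l" for p
  proof (cases "snd p \<in> B (fst p)")
    case False then show ?thesis unfolding Hs_def by simp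
  next
    case True
    define y where "y = fst p"
    define b where "b = snd p"
    have b: "b \<in> B y" using True unfolding y_def b_def .
    define w where "w = AA y + b"
    have m1: "inner (b - bk k) (y - xb k) \<ge> 0" using monB[OF b bk_in] .
    have m2: "inner (A1 y - A1 (xb k)) (y - xb k) \<ge> 0" by (rule monA1)
    have m3: "inner (A2 y - A2 (xb k)) (y - xb k) \<ge> 0" by (rule monA2)
    have "w - e k = (A1 y - A1 (xb k)) + (A2 y - A2 (xb k)) + (b - bk k)"
      unfolding w_def e_def by (simp add: algebra_simps)
    then have "inner (w - e k) (y - xb k) \<ge> 0" using m1 m2 m3 by (simp add: inner_add_left)
    then have i1: "inner (e k) (y - xb k) \<le> inner w (y - xb k)" by (simp add: inner_diff_left)
    have "norm (y - xb k) \<le> norm (y - x 0) + norm (x 0 - xb k)"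
      using norm_triangle_ineq[of "y - x 0" "x 0 - xb k"] by simp
    then have ny: "norm (y - xb k) \<le> R + L + 1" using R[OF p] dist0 c unfolding y_def by linarith
    have "- inner (e k) (y - xb k) \<le> norm (e k) * norm (y - xb k)"
      using norm_cauchy_schwarz[of "- e k" "y - xb k"] by simp
    also have "\<dots> \<le> ep * (R + L + 1)" using k(2) ny ep(1) by (intro mult_mono) auto
    also have "\<dots> \<le> c" by (rule ep(3))
    finally have "inner w (xb k) \<le> inner w y + c" using i1 by (simp add: inner_diff_right)
    then show ?thesis unfolding Hs_def w_def y_def b_def c_def using True by simp
  qed
  moreover have "xb k \<in> cball (x 0) (L + c)" using dist0 by (simp add: dist_norm)
  ultimately have "xb k \<in> Dset i" unfolding Dset_def i c_def by simp
  then show ?thesis by blast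
qed

lemma z_exists: "\<exists>z. norm (z - x 0) \<le> L \<and> (\<forall>y b. b \<in> B y \<longrightarrow> inner (AA y + b) (y - z) \<ge> 0)"
proof -
  obtain p where p: "\<And>i. p \<in> Dset i"
    using directed_inter[of Dset jn "x 0" "L + 1"] Dset_cc Dset_ne Dset_jn Dset_bd by blast
  have "norm (p - x 0) \<le> L"
  proof (rule lim_aux)
    fix n
    have "p \<in> Dset ([], n)" by (rule p)
    then show "norm (p - x 0) \<le> L + 1 / real (Suc n)" unfolding Dset_def by (simp add: dist_norm norm_minus_commute)
  qed
  moreover have "inner (AA y + b) (y - p) \<ge> 0" if b: "b \<in> B y" for y b
  proof -
    have "inner (AA y + b) p \<le> inner (AA y + b) y"
    proof (rule lim_aux)
      fix n
      have "p \<in> Dset ([(y, b)], n)" by (rule p)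
      then show "inner (AA y + b) p \<le> inner (AA y + b) y + 1 / real (Suc n)"
        unfolding Dset_def Hs_def using b by simp
    qed
    then show ?thesis by (simp add: inner_diff_right)
  qed
  ultimately show ?thesis by blast
qed

end



context m2
begin

lemma z_in_Z:
  assumes H: "\<And>y b. b \<in> B y \<Longrightarrow> inner (AA y + b) (y - z) \<ge> 0"
  shows "z \<in> Z"
proof -
  obtain C where C: "C > 0" "\<And>u v. norm (A2 u - A2 v) \<le> C * (1 + norm (u - v))"
    using growth[OF uc] by blast
  define K where "K = 1 / \<beta> + C"
  have K: "K > 0" unfolding K_def using beta C(1) by (simp add: add_pos_pos)
  define \<sigma> where "\<sigma> = 1 / (2 * K)"
  have sg: "\<sigma> > 0" "\<sigma> * K = 1 / 2" unfolding \<sigma>_def using K by auto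
  define s where "s n = \<sigma> / real (Suc n)" for n
  have sp: "s n > 0" for n unfolding s_def using sg by simp
  have sle: "s n \<le> \<sigma>" for n unfolding s_def using sg by (simp add: divide_le_eq)
  define yn where "yn n = resolvent (s n) B (z - s n *\<^sub>R AA z)" for n
  define bn where "bn n = (1 / s n) *\<^sub>R (z - s n *\<^sub>R AA z - yn n)" for n
  define qn where "qn n = (1 / s n) *\<^sub>R (z - yn n)" for n
  have bn_in: "bn n \<in> B (yn n)" for n
  proof -
    obtain b where b: "b \<in> B (yn n)" "z - s n *\<^sub>R AA z = yn n + s n *\<^sub>R b"
      using resolvent_prop[OF mmB sp[of n]] unfolding yn_def by blast
    have "bn n = b" unfolding bn_def b(2) using sp[of n] by simp
    then show ?thesis using b by simp
  qed
  have bq: "bn n = qn n - AA z" for n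
    unfolding bn_def qn_def using sp[of n] by (simp add: scaleR_diff_right algebra_simps)
  have AAb: "norm (AA u - AA z) \<le> K * norm (u - z) + C" for u
  proof -
    have "norm (AA u - AA z) \<le> norm (A1 u - A1 z) + norm (A2 u - A2 z)"
      using norm_triangle_ineq[of "A1 u - A1 z" "A2 u - A2 z"] by (simp add: algebra_simps)
    moreover have "norm (A1 u - A1 z) \<le> norm (u - z) / \<beta>" using lipA1[of u z] beta by (simp add: field_simps)
    moreover have "norm (A2 u - A2 z) \<le> C * (1 + norm (u - z))" by (rule C(2))
    ultimately show ?thesis unfolding K_def by (simp add: algebra_simps)
  qed
  have step1: "norm (yn n - z) \<le> s n * norm (AA (yn n) - AA z)" for n
  proof -
    have h: "inner (AA (yn n) + bn n) (yn n - z) \<ge> 0" using H[OF bn_in[of n]] .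
    have eq: "AA (yn n) + bn n = (AA (yn n) - AA z) - (1 / s n) *\<^sub>R (yn n - z)"
      unfolding bq qn_def by (simp add: scaleR_diff_right algebra_simps)
    have inn: "inner (w - (1 / s n) *\<^sub>R r) r = inner w r - (1 / s n) * (norm r)\<^sup>2" for w r :: 'a
      by (simp add: inner_diff_left power2_norm_eq_inner)
    have "inner (AA (yn n) + bn n) (yn n - z) = inner (AA (yn n) - AA z) (yn n - z) - (1 / s n) * (norm (yn n - z))\<^sup>2"
      unfolding eq by (rule inn)
    with h have "(1 / s n) * (norm (yn n - z))\<^sup>2 \<le> inner (AA (yn n) - AA z) (yn n - z)" by simp
    also have "\<dots> \<le> norm (AA (yn n) - AA z) * norm (yn n - z)" by (rule norm_cauchy_schwarz)
    finally have h2: "(1 / s n) * (norm (yn n - z))\<^sup>2 \<le> norm (AA (yn n) - AA z) * norm (yn n - z)" .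
    show ?thesis
    proof (cases "yn n = z")
      case True then show ?thesis using sp[of n] by simp
    next
      case False
      then have pos: "norm (yn n - z) > 0" by simp
      have "((1 / s n) * norm (yn n - z)) * norm (yn n - z) \<le> norm (AA (yn n) - AA z) * norm (yn n - z)"
        using h2 by (simp add: power2_eq_square mult.assoc)
      then have "(1 / s n) * norm (yn n - z) \<le> norm (AA (yn n) - AA z)"
        using pos by (rule mult_right_le_imp_le)
      then show ?thesis using sp[of n] by (simp add: divide_le_eq mult.commute)
    qed
  qed
  have ybd: "norm (yn n - z) \<le> 2 * C * s n" for n
  proof -
    have a1: "norm (yn n - z) \<le> s n * (K * norm (yn n - z) + C)"
      using step1[of n] AAb[of "yn n"] sp[of n] by (smt (verit) mult_left_mono)
    have a2: "s n * K \<le> 1 / 2" using sle[of n] K sg(2) by (metis mult_right_mono less_imp_le)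
    have a3: "(s n * K) * norm (yn n - z) \<le> (1 / 2) * norm (yn n - z)" using a2 by (intro mult_right_mono) auto
    have a4: "s n * (K * norm (yn n - z) + C) = (s n * K) * norm (yn n - z) + s n * C" by (simp add: algebra_simps)
    have a5: "2 * C * s n = 2 * (s n * C)" by simp
    show ?thesis using a1 a3 a4 a5 by linarith
  qed
  have sl: "s \<longlonglongrightarrow> 0"
  proof -
    have "(\<lambda>n. \<sigma> * (1 / real (Suc n))) \<longlonglongrightarrow> \<sigma> * 0" by (intro tendsto_intros lim_Suc_inv)
    then show ?thesis unfolding s_def by simp
  qed
  have y0: "(\<lambda>n. yn n - z) \<longlonglongrightarrow> 0"
  proof (rule Lim_null_comparison)
    show "\<forall>\<^sub>F n in sequentially. norm (yn n - z) \<le> 2 * C * s n" using ybd by simp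
    show "(\<lambda>n. 2 * C * s n) \<longlonglongrightarrow> 0" using tendsto_mult_right_zero[OF sl, of "2 * C"] by simp
  qed
  then have yl: "yn \<longlonglongrightarrow> z"
  proof -
    have "(\<lambda>n. (yn n - z) + z) \<longlonglongrightarrow> 0 + z" by (intro tendsto_add y0 tendsto_const)
    then show ?thesis by simp
  qed
  have A2l: "(\<lambda>n. A2 (yn n)) \<longlonglongrightarrow> A2 z"
    using continuous_on_tendsto_compose[OF uniformly_continuous_imp_continuous[OF uc] yl] by simp
  have A1l: "(\<lambda>n. A1 (yn n) - A1 z) \<longlonglongrightarrow> 0"
  proof (rule Lim_null_comparison)
    show "\<forall>\<^sub>F n in sequentially. norm (A1 (yn n) - A1 z) \<le> norm (yn n - z) / \<beta>"
      using lipA1 beta by (intro always_eventually allI) (simp add: field_simps)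
    have "(\<lambda>n. norm (yn n - z) / \<beta>) \<longlonglongrightarrow> 0 / \<beta>" using beta by (intro tendsto_intros y0[THEN tendsto_norm_zero]) auto
    then show "(\<lambda>n. norm (yn n - z) / \<beta>) \<longlonglongrightarrow> 0" by simp
  qed
  have AAl: "(\<lambda>n. AA (yn n) - AA z) \<longlonglongrightarrow> 0"
  proof -
    have "(\<lambda>n. (A1 (yn n) - A1 z) + (A2 (yn n) - A2 z)) \<longlonglongrightarrow> 0 + (A2 z - A2 z)"
      by (intro tendsto_add A1l tendsto_diff A2l tendsto_const)
    then show ?thesis by (simp add: algebra_simps)
  qed
  have ql: "qn \<longlonglongrightarrow> 0"
  proof (rule Lim_null_comparison)
    show "\<forall>\<^sub>F n in sequentially. norm (qn n) \<le> norm (AA (yn n) - AA z)"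
    proof (intro always_eventually allI)
      fix n
      have "norm (qn n) = norm (yn n - z) / s n" unfolding qn_def using sp[of n]
        by (simp add: norm_minus_commute)
      also have "\<dots> \<le> norm (AA (yn n) - AA z)" using step1[of n] sp[of n] by (simp add: divide_le_eq mult.commute)
      finally show "norm (qn n) \<le> norm (AA (yn n) - AA z)" .
    qed
    show "(\<lambda>n. norm (AA (yn n) - AA z)) \<longlonglongrightarrow> 0" using AAl tendsto_norm_zero by blast
  qed
  have bl: "bn \<longlonglongrightarrow> - AA z"
  proof -
    have "(\<lambda>n. qn n - AA z) \<longlonglongrightarrow> 0 - AA z" by (intro tendsto_diff ql tendsto_const)
    then show ?thesis unfolding bq[symmetric] by simp
  qed
  have "- AA z \<in> B z"
  proof -
    have mp: "\<And>p q. (\<And>y v. v \<in> B y \<Longrightarrow> inner (v - q) (y - p) \<ge> 0) \<Longrightarrow> q \<in> B p"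
      using mmB unfolding mm_prop_def by blast
    show ?thesis
    proof (rule mp)
      fix y v assume v: "v \<in> B y"
      have "(\<lambda>n. inner (v - bn n) (y - yn n)) \<longlonglongrightarrow> inner (v - - AA z) (y - z)"
        by (intro tendsto_intros bl yl)
      moreover have "\<forall>n. inner (v - bn n) (y - yn n) \<ge> 0" using monB[OF v bn_in] by blast
      ultimately show "inner (v - - AA z) (y - z) \<ge> 0"
        by (intro LIMSEQ_le_const) auto
    qed
  qed
  then show ?thesis unfolding zer_sum_def by force
qed

lemma converges: "x \<longlonglongrightarrow> xbar"
proof -
  obtain z where z: "norm (z - x 0) \<le> L" "\<And>y b. b \<in> B y \<Longrightarrow> inner (AA y + b) (y - z) \<ge> 0"
    using z_exists by blast
  have zZ: "z \<in> Z" using z_in_Z z(2) by blast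
  have "norm (x 0 - xbar) \<le> norm (x 0 - z)" using xbar_min zZ by blast
  then have le1: "norm (xbar - x 0) \<le> L" using z(1) by (simp add: norm_minus_commute)
  have le2: "L \<le> norm (xbar - x 0)" using N_lim N_le by (intro LIMSEQ_le_const2) auto
  have Leq: "L = norm (xbar - x 0)" using le1 le2 by simp
  have bound: "(norm (x k - xbar))\<^sup>2 \<le> L\<^sup>2 - (N k)\<^sup>2" for k
  proof -
    have "xbar \<in> Gamma_set (x 0) (x k)" using xbar_in Z_sub_G by blast
    then have i: "inner (x 0 - x k) (xbar - x k) \<le> 0" unfolding Gamma_set_def by simp
    have e: "xbar - x 0 = (xbar - x k) + (x k - x 0)" by simp
    have "(norm (xbar - x 0))\<^sup>2 = (norm (xbar - x k))\<^sup>2 + 2 * inner (xbar - x k) (x k - x 0) + (N k)\<^sup>2"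
      unfolding N_def e sumnorm ..
    moreover have "inner (xbar - x k) (x k - x 0) = - inner (x 0 - x k) (xbar - x k)"
      by (simp add: inner_diff_left inner_diff_right inner_commute)
    ultimately show ?thesis using i unfolding Leq by (simp add: norm_minus_commute)
  qed
  have "(\<lambda>k. sqrt (L\<^sup>2 - (N k)\<^sup>2)) \<longlonglongrightarrow> sqrt (L\<^sup>2 - L\<^sup>2)"
    by (intro tendsto_intros N_lim)
  then have sl: "(\<lambda>k. sqrt (L\<^sup>2 - (N k)\<^sup>2)) \<longlonglongrightarrow> 0" by simp
  have "(\<lambda>k. x k - xbar) \<longlonglongrightarrow> 0"
  proof (rule Lim_null_comparison[OF _ sl])
    show "\<forall>\<^sub>F k in sequentially. norm (x k - xbar) \<le> sqrt (L\<^sup>2 - (N k)\<^sup>2)"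
      using bound by (intro always_eventually allI real_le_rsqrt) auto
  qed
  then have "(\<lambda>k. (x k - xbar) + xbar) \<longlonglongrightarrow> 0 + xbar" by (intro tendsto_add tendsto_const)
  then show ?thesis by simp
qed

end


theorem theorem4p15:
  fixes A1 A2 :: "'a::{real_inner,complete_space} \<Rightarrow> 'a"
    and B :: "'a \<Rightarrow> 'a set"
    and \<beta> \<theta> \<delta> \<delta>b \<alpha>0 :: real
    and x :: "nat \<Rightarrow> 'a" and alpha :: "nat \<Rightarrow> real"
  assumes "\<beta> > 0" and "cocoercive \<beta> A1"
    and "maximally_monotone (\<lambda>u. {A2 u})" and "uniformly_continuous_on UNIV A2"
    and "maximally_monotone B"
    and "0 < \<theta>" "\<theta> < 1" "0 < \<delta>" "\<delta> < 1" "\<delta>b > 0" "1 - \<delta> - \<delta>b > 0"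
    and "\<alpha>0 > 0" "\<alpha>0 \<le> 4 * \<beta> * \<delta>b"
    and "zer_sum (\<lambda>u. A1 u + A2 u) B \<noteq> {}"
    and "closed (zer_sum (\<lambda>u. A1 u + A2 u) B)"
    and "convex (zer_sum (\<lambda>u. A1 u + A2 u) B)"
    and "method2_seq A1 A2 B \<theta> \<delta> \<delta>b \<alpha>0 x alpha"
    and "\<forall>k. x (Suc k) \<noteq> x k"
  shows "x \<longlonglongrightarrow> proj (zer_sum (\<lambda>u. A1 u + A2 u) B) (x 0)"
proof -
  interpret m2 A1 A2 B \<beta> \<theta> \<delta> \<delta>b \<alpha>0 x alpha
    by (rule m2.intro) (use assms in auto)
  show ?thesis using converges unfolding xbar_def .
qed

end
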